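(* Let $c,\delta,M$ be positive constants and fix a metric on the disc $D_c=\{z\in\mathbb{C}:|z|<c\}$, with Laplacian $\triangle$. Then there is a constant $\lambda=\lambda(\delta,M,c)$ such that every smooth function $f:D_c\to\mathbb{C}$ satisfying $|f|\le\delta$ and $|d\triangle f|\le M$ on $D_c$ satisfies $|\triangle f|\le\lambda$ on $D_{c/4}=\{|z|<c/4\}$. *)

theory Defs
  imports "HOL-Analysis.Analysis"
begin

definition dx :: "(complex \<Rightarrow> 'a::real_normed_vector) \<Rightarrow> complex \<Rightarrow> 'a" where
  "dx f z = vector_derivative (\<lambda>t::real. f (z + of_real t)) (at 0)"

definition dy :: "(complex \<Rightarrow> 'a::real_normed_vector) \<Rightarrow> complex \<Rightarrow> 'a" where
  "dy f z = vector_derivative (\<lambda>t::real. f (z + \<i> * of_real t)) (at 0)"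

text \<open>Iterated partial derivatives: True = d/dx, False = d/dy (innermost last).\<close>
fun iter_partial :: "bool list \<Rightarrow> (complex \<Rightarrow> 'a::real_normed_vector) \<Rightarrow> complex \<Rightarrow> 'a" where
  "iter_partial [] f = f"
| "iter_partial (b # bs) f = (if b then dx else dy) (iter_partial bs f)"

definition smooth_on :: "complex set \<Rightarrow> (complex \<Rightarrow> 'a::real_normed_vector) \<Rightarrow> bool" where
  "smooth_on S f \<longleftrightarrow>
     (\<forall>bs. continuous_on S (iter_partial bs f) \<and>
        (\<forall>z\<in>S. ((\<lambda>t::real. iter_partial bs f (z + of_real t)) has_vector_derivative
                    dx (iter_partial bs f) z) (at 0) \<and>
                ((\<lambda>t::real. iter_partial bs f (z + \<i> * of_real t)) has_vector_derivative
                    dy (iter_partial bs f) z) (at 0)))"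

text \<open>A smooth Riemannian metric g = g11 dx^2 + 2 g12 dx dy + g22 dy^2 on S.\<close>
definition riem_metric_on :: "complex set \<Rightarrow> (complex \<Rightarrow> real) \<Rightarrow> (complex \<Rightarrow> real) \<Rightarrow> (complex \<Rightarrow> real) \<Rightarrow> bool" where
  "riem_metric_on S g11 g12 g22 \<longleftrightarrow>
     smooth_on S g11 \<and> smooth_on S g12 \<and> smooth_on S g22 \<and>
     (\<forall>z\<in>S. g11 z > 0 \<and> g11 z * g22 z - (g12 z)\<^sup>2 > 0)"

definition gdet :: "(complex \<Rightarrow> real) \<Rightarrow> (complex \<Rightarrow> real) \<Rightarrow> (complex \<Rightarrow> real) \<Rightarrow> complex \<Rightarrow> real" where
  "gdet g11 g12 g22 z = g11 z * g22 z - (g12 z)\<^sup>2"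

text \<open>Laplace--Beltrami operator of the metric:
  Lap f = (1/sqrt det g) * d_i (sqrt det g * g^{ij} d_j f), with inverse metric
  g^{11} = g22/det, g^{12} = -g12/det, g^{22} = g11/det.\<close>
definition laplacian ::
  "(complex \<Rightarrow> real) \<Rightarrow> (complex \<Rightarrow> real) \<Rightarrow> (complex \<Rightarrow> real) \<Rightarrow> (complex \<Rightarrow> complex) \<Rightarrow> complex \<Rightarrow> complex" where
  "laplacian g11 g12 g22 f z =
     (let det = gdet g11 g12 g22;
          X = (\<lambda>w. complex_of_real (sqrt (det w)) *
                  (complex_of_real (g22 w / det w) * dx f w - complex_of_real (g12 w / det w) * dy f w));
          Y = (\<lambda>w. complex_of_real (sqrt (det w)) *
                  (complex_of_real (- g12 w / det w) * dx f w + complex_of_real (g11 w / det w) * dy f w))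
      in complex_of_real (1 / sqrt (det z)) * (dx X z + dy Y z))"

text \<open>Pointwise norm of the differential du of a complex function with respect to the
  metric: |du|_g^2 = g^{ij} <d_i u, d_j u> (real inner product on C = R^2).\<close>
definition dnorm ::
  "(complex \<Rightarrow> real) \<Rightarrow> (complex \<Rightarrow> real) \<Rightarrow> (complex \<Rightarrow> real) \<Rightarrow> (complex \<Rightarrow> complex) \<Rightarrow> complex \<Rightarrow> real" where
  "dnorm g11 g12 g22 u z =
     (let det = gdet g11 g12 g22 z; ux = dx u z; uy = dy u z
      in sqrt ((g22 z / det) * (cmod ux)\<^sup>2 - 2 * (g12 z / det) * (ux \<bullet> uy)
               + (g11 z / det) * (cmod uy)\<^sup>2))"

end

theory Submission
  imports Defs
begin


definition C1 :: "complex set \<Rightarrow> (complex \<Rightarrow> 'a::real_normed_vector) \<Rightarrow> bool" where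
 "C1 S u \<longleftrightarrow> continuous_on S u \<and>
     (\<forall>z\<in>S. ((\<lambda>t::real. u (z + of_real t)) has_vector_derivative dx u z) (at 0) \<and>
            ((\<lambda>t::real. u (z + \<i> * of_real t)) has_vector_derivative dy u z) (at 0))"

definition sm :: "nat \<Rightarrow> complex set \<Rightarrow> (complex \<Rightarrow> 'a::real_normed_vector) \<Rightarrow> bool" where
 "sm n S u \<longleftrightarrow> (\<forall>bs. length bs \<le> n \<longrightarrow> C1 S (iter_partial bs u))"

lemma smooth_on_C1: "smooth_on S u \<longleftrightarrow> (\<forall>bs. C1 S (iter_partial bs u))"
  unfolding smooth_on_def C1_def by blast

lemma smooth_on_sm: "smooth_on S u \<longleftrightarrow> (\<forall>n. sm n S u)"
proof
  assume "smooth_on S u" then show "\<forall>n. sm n S u" unfolding smooth_on_C1 sm_def by blast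
next
  assume a: "\<forall>n. sm n S u"
  show "smooth_on S u" unfolding smooth_on_C1
  proof
    fix bs :: "bool list"
    from a have "sm (length bs) S u" by blast
    then show "C1 S (iter_partial bs u)" unfolding sm_def by blast
  qed
qed

lemma ip_append: "iter_partial (bs @ [b]) u = iter_partial bs ((if b then dx else dy) u)"
  by (induction bs) auto

lemma sm0: "sm 0 S u \<longleftrightarrow> C1 S u"
  unfolding sm_def by auto

lemma sm_Suc: "sm (Suc n) S u \<longleftrightarrow> C1 S u \<and> sm n S (dx u) \<and> sm n S (dy u)"
proof
  assume a: "sm (Suc n) S u"
  have "sm n S (dx u)" unfolding sm_def
  proof (intro allI impI)
    fix bs :: "bool list" assume "length bs \<le> n"
    then have "length (bs @ [True]) \<le> Suc n" by simp
    with a have "C1 S (iter_partial (bs @ [True]) u)" unfolding sm_def by blast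
    then show "C1 S (iter_partial bs (dx u))" by (simp add: ip_append)
  qed
  moreover have "sm n S (dy u)" unfolding sm_def
  proof (intro allI impI)
    fix bs :: "bool list" assume "length bs \<le> n"
    then have "length (bs @ [False]) \<le> Suc n" by simp
    with a have "C1 S (iter_partial (bs @ [False]) u)" unfolding sm_def by blast
    then show "C1 S (iter_partial bs (dy u))" by (simp add: ip_append)
  qed
  moreover have "C1 S u" using a unfolding sm_def by (metis iter_partial.simps(1) le0 list.size(3))
  ultimately show "C1 S u \<and> sm n S (dx u) \<and> sm n S (dy u)" by blast
next
  assume a: "C1 S u \<and> sm n S (dx u) \<and> sm n S (dy u)"
  show "sm (Suc n) S u" unfolding sm_def
  proof (intro allI impI)
    fix bs :: "bool list" assume l: "length bs \<le> Suc n"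
    show "C1 S (iter_partial bs u)"
    proof (cases bs rule: rev_cases)
      case Nil
      then show ?thesis using a by simp
    next
      case (snoc cs b)
      then have "length cs \<le> n" using l by simp
      then show ?thesis using a unfolding snoc ip_append sm_def by (cases b) auto
    qed
  qed
qed

lemma sm_mono: "sm n S u \<Longrightarrow> m \<le> n \<Longrightarrow> sm m S u"
  unfolding sm_def by auto

lemma sm_C1: "sm n S u \<Longrightarrow> C1 S u"
  using sm0 sm_mono by blast

lemma sm_dx: "sm (Suc n) S u \<Longrightarrow> sm n S (dx u)" and sm_dy: "sm (Suc n) S u \<Longrightarrow> sm n S (dy u)"
  by (simp_all add: sm_Suc)

lemma line_open_x: "open S \<Longrightarrow> open {t::real. z + of_real t \<in> (S::complex set)}"
proof -
  assume "open S"
  have "continuous_on UNIV (\<lambda>t::real. z + of_real t)" by (intro continuous_intros)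
  from open_vimage[OF \<open>open S\<close> this] show ?thesis by (simp add: vimage_def)
qed

lemma line_open_y: "open S \<Longrightarrow> open {t::real. z + \<i> * of_real t \<in> (S::complex set)}"
proof -
  assume "open S"
  have "continuous_on UNIV (\<lambda>t::real. z + \<i> * of_real t)" by (intro continuous_intros)
  from open_vimage[OF \<open>open S\<close> this] show ?thesis by (simp add: vimage_def)
qed

lemma hvd_local_x:
  fixes u v :: "complex \<Rightarrow> 'a::real_normed_vector"
  assumes "open S" "z \<in> S" "\<forall>w\<in>S. u w = v w"
    and "((\<lambda>t::real. u (z + of_real t)) has_vector_derivative d) (at 0)"
  shows "((\<lambda>t::real. v (z + of_real t)) has_vector_derivative d) (at 0)"
  by (rule has_vector_derivative_transform_within_open[OF assms(4) line_open_x[OF assms(1)]])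
     (use assms in auto)

lemma hvd_local_y:
  fixes u v :: "complex \<Rightarrow> 'a::real_normed_vector"
  assumes "open S" "z \<in> S" "\<forall>w\<in>S. u w = v w"
    and "((\<lambda>t::real. u (z + \<i> * of_real t)) has_vector_derivative d) (at 0)"
  shows "((\<lambda>t::real. v (z + \<i> * of_real t)) has_vector_derivative d) (at 0)"
  by (rule has_vector_derivative_transform_within_open[OF assms(4) line_open_y[OF assms(1)]])
     (use assms in auto)

lemma dx_local:
  fixes u v :: "complex \<Rightarrow> 'a::real_normed_vector"
  assumes "open S" "z \<in> S" "\<forall>w\<in>S. u w = v w"
  shows "dx u z = dx v z"
proof -
  have s: "\<forall>w\<in>S. v w = u w" using assms(3) by simp
  have "\<And>d. ((\<lambda>t::real. u (z + of_real t)) has_vector_derivative d) (at 0) \<longleftrightarrow>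
             ((\<lambda>t::real. v (z + of_real t)) has_vector_derivative d) (at 0)"
    using hvd_local_x[OF assms] hvd_local_x[OF assms(1,2) s] by blast
  then show ?thesis unfolding dx_def vector_derivative_def by simp
qed

lemma dy_local:
  fixes u v :: "complex \<Rightarrow> 'a::real_normed_vector"
  assumes "open S" "z \<in> S" "\<forall>w\<in>S. u w = v w"
  shows "dy u z = dy v z"
proof -
  have s: "\<forall>w\<in>S. v w = u w" using assms(3) by simp
  have "\<And>d. ((\<lambda>t::real. u (z + \<i> * of_real t)) has_vector_derivative d) (at 0) \<longleftrightarrow>
             ((\<lambda>t::real. v (z + \<i> * of_real t)) has_vector_derivative d) (at 0)"
    using hvd_local_y[OF assms] hvd_local_y[OF assms(1,2) s] by blast
  then show ?thesis unfolding dy_def vector_derivative_def by simp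
qed

lemma ip_local:
  fixes u v :: "complex \<Rightarrow> 'a::real_normed_vector"
  assumes "open S" "\<forall>w\<in>S. u w = v w"
  shows "\<forall>z\<in>S. iter_partial bs u z = iter_partial bs v z"
proof (induction bs)
  case Nil
  then show ?case using assms by simp
next
  case (Cons b bs)
  then show ?case using dx_local[OF assms(1) _ Cons] dy_local[OF assms(1) _ Cons] by simp
qed

lemma C1_cong:
  fixes u v :: "complex \<Rightarrow> 'a::real_normed_vector"
  assumes "open S" "\<forall>w\<in>S. u w = v w" "C1 S u"
  shows "C1 S v"
  unfolding C1_def
proof (intro conjI ballI)
  have "continuous_on S u" using assms(3) unfolding C1_def by blast
  then show "continuous_on S v" using assms(2) continuous_on_cong by force
next
  fix z assume z: "z \<in> S"
  have e1: "dx u z = dx v z" by (rule dx_local[OF assms(1) z assms(2)])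
  have e2: "dy u z = dy v z" by (rule dy_local[OF assms(1) z assms(2)])
  have h1: "((\<lambda>t::real. u (z + of_real t)) has_vector_derivative dx u z) (at 0)"
    and h2: "((\<lambda>t::real. u (z + \<i> * of_real t)) has_vector_derivative dy u z) (at 0)"
    using assms(3) z unfolding C1_def by blast+
  show "((\<lambda>t::real. v (z + of_real t)) has_vector_derivative dx v z) (at 0)"
    using hvd_local_x[OF assms(1) z assms(2) h1] e1 by simp
  show "((\<lambda>t::real. v (z + \<i> * of_real t)) has_vector_derivative dy v z) (at 0)"
    using hvd_local_y[OF assms(1) z assms(2) h2] e2 by simp
qed

lemma sm_cong:
  fixes u v :: "complex \<Rightarrow> 'a::real_normed_vector"
  assumes "open S" "\<forall>w\<in>S. u w = v w" "sm n S u"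
  shows "sm n S v"
  unfolding sm_def
proof (intro allI impI)
  fix bs :: "bool list" assume "length bs \<le> n"
  then have "C1 S (iter_partial bs u)" using assms(3) unfolding sm_def by blast
  then show "C1 S (iter_partial bs v)" using C1_cong[OF assms(1) ip_local[OF assms(1,2)]] by blast
qed



lemma dx_eq: "((\<lambda>t::real. u (z + of_real t)) has_vector_derivative d) (at 0) \<Longrightarrow> dx u z = d"
  unfolding dx_def by (rule vector_derivative_at)

lemma dy_eq: "((\<lambda>t::real. u (z + \<i> * of_real t)) has_vector_derivative d) (at 0) \<Longrightarrow> dy u z = d"
  unfolding dy_def by (rule vector_derivative_at)

lemma C1_intro:
  assumes "continuous_on S v"
    and "\<And>z. z \<in> S \<Longrightarrow> ((\<lambda>t::real. v (z + of_real t)) has_vector_derivative X z) (at 0)"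
    and "\<And>z. z \<in> S \<Longrightarrow> ((\<lambda>t::real. v (z + \<i> * of_real t)) has_vector_derivative Y z) (at 0)"
  shows "C1 S v" "\<And>z. z \<in> S \<Longrightarrow> dx v z = X z" "\<And>z. z \<in> S \<Longrightarrow> dy v z = Y z"
  using assms dx_eq dy_eq unfolding C1_def by metis+

lemma C1D:
  assumes "C1 S u" "z \<in> S"
  shows "continuous_on S u" "((\<lambda>t::real. u (z + of_real t)) has_vector_derivative dx u z) (at 0)"
     "((\<lambda>t::real. u (z + \<i> * of_real t)) has_vector_derivative dy u z) (at 0)"
  using assms unfolding C1_def by blast+

lemma C1_add:
  fixes u v :: "complex \<Rightarrow> 'a::real_normed_vector"
  assumes "C1 S u" "C1 S v"
  shows "C1 S (\<lambda>z. u z + v z)" "\<And>z. z \<in> S \<Longrightarrow> dx (\<lambda>z. u z + v z) z = dx u z + dx v z"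
     "\<And>z. z \<in> S \<Longrightarrow> dy (\<lambda>z. u z + v z) z = dy u z + dy v z"
proof -
  have c: "continuous_on S (\<lambda>z. u z + v z)"
    using assms unfolding C1_def by (intro continuous_intros) auto
  note r = C1_intro[OF c, of "\<lambda>z. dx u z + dx v z" "\<lambda>z. dy u z + dy v z"]
  have x: "((\<lambda>t::real. u (z + of_real t) + v (z + of_real t)) has_vector_derivative dx u z + dx v z) (at 0)"
    if "z \<in> S" for z using C1D[OF assms(1) that] C1D[OF assms(2) that] by (intro derivative_intros)
  have y: "((\<lambda>t::real. u (z + \<i> * of_real t) + v (z + \<i> * of_real t)) has_vector_derivative dy u z + dy v z) (at 0)"
    if "z \<in> S" for z using C1D[OF assms(1) that] C1D[OF assms(2) that] by (intro derivative_intros)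
  show "C1 S (\<lambda>z. u z + v z)" "\<And>z. z \<in> S \<Longrightarrow> dx (\<lambda>z. u z + v z) z = dx u z + dx v z"
     "\<And>z. z \<in> S \<Longrightarrow> dy (\<lambda>z. u z + v z) z = dy u z + dy v z"
    using r[OF x y] by auto
qed

lemma C1_mult:
  fixes u v :: "complex \<Rightarrow> 'a::real_normed_algebra"
  assumes "C1 S u" "C1 S v"
  shows "C1 S (\<lambda>z. u z * v z)" "\<And>z. z \<in> S \<Longrightarrow> dx (\<lambda>z. u z * v z) z = u z * dx v z + dx u z * v z"
     "\<And>z. z \<in> S \<Longrightarrow> dy (\<lambda>z. u z * v z) z = u z * dy v z + dy u z * v z"
proof -
  have c: "continuous_on S (\<lambda>z. u z * v z)"
    using assms unfolding C1_def by (intro continuous_intros) auto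
  note r = C1_intro[OF c, of "\<lambda>z. u z * dx v z + dx u z * v z" "\<lambda>z. u z * dy v z + dy u z * v z"]
  have x: "((\<lambda>t::real. u (z + of_real t) * v (z + of_real t)) has_vector_derivative u z * dx v z + dx u z * v z) (at 0)"
    if "z \<in> S" for z using has_vector_derivative_mult[OF C1D(2)[OF assms(1) that] C1D(2)[OF assms(2) that]] by simp
  have y: "((\<lambda>t::real. u (z + \<i> * of_real t) * v (z + \<i> * of_real t)) has_vector_derivative u z * dy v z + dy u z * v z) (at 0)"
    if "z \<in> S" for z using has_vector_derivative_mult[OF C1D(3)[OF assms(1) that] C1D(3)[OF assms(2) that]] by simp
  show "C1 S (\<lambda>z. u z * v z)" "\<And>z. z \<in> S \<Longrightarrow> dx (\<lambda>z. u z * v z) z = u z * dx v z + dx u z * v z"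
     "\<And>z. z \<in> S \<Longrightarrow> dy (\<lambda>z. u z * v z) z = u z * dy v z + dy u z * v z"
    using r[OF x y] by auto
qed

lemma C1_const:
  shows "C1 S (\<lambda>z. c)" "dx (\<lambda>z. c) z = 0" "dy (\<lambda>z. c) z = 0"
proof -
  have x: "((\<lambda>t::real. c) has_vector_derivative 0) (at 0)" by simp
  show "C1 S (\<lambda>z. c)" by (rule C1_intro(1)[where X="\<lambda>z. 0" and Y="\<lambda>z. 0"]) (auto intro: continuous_intros)
  show "dx (\<lambda>z. c) z = 0" "dy (\<lambda>z. c) z = 0" using dx_eq[OF x] dy_eq[OF x] by auto
qed

lemma C1_of_real:
  fixes g :: "complex \<Rightarrow> real"
  assumes "C1 S g"
  shows "C1 S (\<lambda>z. (of_real (g z) :: complex))" "\<And>z. z \<in> S \<Longrightarrow> dx (\<lambda>z. (of_real (g z)::complex)) z = of_real (dx g z)"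
     "\<And>z. z \<in> S \<Longrightarrow> dy (\<lambda>z. (of_real (g z)::complex)) z = of_real (dy g z)"
proof -
  have c: "continuous_on S (\<lambda>z. (of_real (g z)::complex))"
    using assms unfolding C1_def by (intro continuous_intros) auto
  note r = C1_intro[OF c, of "\<lambda>z. of_real (dx g z)" "\<lambda>z. of_real (dy g z)"]
  have x: "((\<lambda>t::real. (of_real (g (z + of_real t))::complex)) has_vector_derivative of_real (dx g z)) (at 0)"
    if "z \<in> S" for z using C1D(2)[OF assms(1) that] 
    by (intro has_vector_derivative_of_real) (simp add: has_real_derivative_iff_has_vector_derivative)
  have y: "((\<lambda>t::real. (of_real (g (z + \<i> * of_real t))::complex)) has_vector_derivative of_real (dy g z)) (at 0)"
    if "z \<in> S" for z using C1D(3)[OF assms(1) that] 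
    by (intro has_vector_derivative_of_real) (simp add: has_real_derivative_iff_has_vector_derivative)
  show "C1 S (\<lambda>z. (of_real (g z) :: complex))" "\<And>z. z \<in> S \<Longrightarrow> dx (\<lambda>z. (of_real (g z)::complex)) z = of_real (dx g z)"
     "\<And>z. z \<in> S \<Longrightarrow> dy (\<lambda>z. (of_real (g z)::complex)) z = of_real (dy g z)"
    using r[OF x y] by auto
qed

lemma C1_sqrt:
  fixes g :: "complex \<Rightarrow> real"
  assumes "C1 S g" "\<And>z. z \<in> S \<Longrightarrow> g z > 0"
  shows "C1 S (\<lambda>z. sqrt (g z))" "\<And>z. z \<in> S \<Longrightarrow> dx (\<lambda>z. sqrt (g z)) z = dx g z * (inverse (sqrt (g z)) * (1/2))"
     "\<And>z. z \<in> S \<Longrightarrow> dy (\<lambda>z. sqrt (g z)) z = dy g z * (inverse (sqrt (g z)) * (1/2))"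
proof -
  have c: "continuous_on S (\<lambda>z. sqrt (g z))"
    using assms unfolding C1_def by (intro continuous_intros) auto
  note r = C1_intro[OF c, of "\<lambda>z. dx g z * (inverse (sqrt (g z)) * (1/2))" "\<lambda>z. dy g z * (inverse (sqrt (g z)) * (1/2))"]
  have x: "((\<lambda>t::real. sqrt (g (z + of_real t))) has_vector_derivative dx g z * (inverse (sqrt (g z)) * (1/2))) (at 0)"
    if "z \<in> S" for z
  proof -
    have "((\<lambda>t::real. g (z + of_real t)) has_real_derivative dx g z) (at 0)"
      using C1D(2)[OF assms(1) that] by (simp add: has_real_derivative_iff_has_vector_derivative)
    from DERIV_chain2[OF DERIV_real_sqrt this] assms(2)[OF that]
    show ?thesis by (simp add: has_real_derivative_iff_has_vector_derivative[symmetric] mult_ac)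
  qed
  have y: "((\<lambda>t::real. sqrt (g (z + \<i> * of_real t))) has_vector_derivative dy g z * (inverse (sqrt (g z)) * (1/2))) (at 0)"
    if "z \<in> S" for z
  proof -
    have "((\<lambda>t::real. g (z + \<i> * of_real t)) has_real_derivative dy g z) (at 0)"
      using C1D(3)[OF assms(1) that] by (simp add: has_real_derivative_iff_has_vector_derivative)
    from DERIV_chain2[OF DERIV_real_sqrt this] assms(2)[OF that]
    show ?thesis by (simp add: has_real_derivative_iff_has_vector_derivative[symmetric] mult_ac)
  qed
  show "C1 S (\<lambda>z. sqrt (g z))" "\<And>z. z \<in> S \<Longrightarrow> dx (\<lambda>z. sqrt (g z)) z = dx g z * (inverse (sqrt (g z)) * (1/2))"
     "\<And>z. z \<in> S \<Longrightarrow> dy (\<lambda>z. sqrt (g z)) z = dy g z * (inverse (sqrt (g z)) * (1/2))"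
    using r[OF x y] by auto
qed

lemma C1_inverse:
  fixes g :: "complex \<Rightarrow> real"
  assumes "C1 S g" "\<And>z. z \<in> S \<Longrightarrow> g z \<noteq> 0"
  shows "C1 S (\<lambda>z. inverse (g z))" "\<And>z. z \<in> S \<Longrightarrow> dx (\<lambda>z. inverse (g z)) z = -1 * (dx g z * (inverse (g z) * inverse (g z)))"
     "\<And>z. z \<in> S \<Longrightarrow> dy (\<lambda>z. inverse (g z)) z = -1 * (dy g z * (inverse (g z) * inverse (g z)))"
proof -
  have c: "continuous_on S (\<lambda>z. inverse (g z))"
    using assms unfolding C1_def by (intro continuous_intros) auto
  note r = C1_intro[OF c, of "\<lambda>z. -1 * (dx g z * (inverse (g z) * inverse (g z)))" "\<lambda>z. -1 * (dy g z * (inverse (g z) * inverse (g z)))"]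
  have x: "((\<lambda>t::real. inverse (g (z + of_real t))) has_vector_derivative -1 * (dx g z * (inverse (g z) * inverse (g z)))) (at 0)"
    if "z \<in> S" for z
  proof -
    have "((\<lambda>t::real. g (z + of_real t)) has_real_derivative dx g z) (at 0)"
      using C1D(2)[OF assms(1) that] by (simp add: has_real_derivative_iff_has_vector_derivative)
    from DERIV_inverse_fun[OF this] assms(2)[OF that]
    show ?thesis by (simp add: has_real_derivative_iff_has_vector_derivative[symmetric] power2_eq_square)
  qed
  have y: "((\<lambda>t::real. inverse (g (z + \<i> * of_real t))) has_vector_derivative -1 * (dy g z * (inverse (g z) * inverse (g z)))) (at 0)"
    if "z \<in> S" for z
  proof -
    have "((\<lambda>t::real. g (z + \<i> * of_real t)) has_real_derivative dy g z) (at 0)"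
      using C1D(3)[OF assms(1) that] by (simp add: has_real_derivative_iff_has_vector_derivative)
    from DERIV_inverse_fun[OF this] assms(2)[OF that]
    show ?thesis by (simp add: has_real_derivative_iff_has_vector_derivative[symmetric] power2_eq_square)
  qed
  show "C1 S (\<lambda>z. inverse (g z))" "\<And>z. z \<in> S \<Longrightarrow> dx (\<lambda>z. inverse (g z)) z = -1 * (dx g z * (inverse (g z) * inverse (g z)))"
     "\<And>z. z \<in> S \<Longrightarrow> dy (\<lambda>z. inverse (g z)) z = -1 * (dy g z * (inverse (g z) * inverse (g z)))"
    using r[OF x y] by auto
qed



lemma sm_add:
  fixes u v :: "complex \<Rightarrow> 'a::real_normed_vector"
  assumes "open S"
  shows "sm n S u \<Longrightarrow> sm n S v \<Longrightarrow> sm n S (\<lambda>z. u z + v z)"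
proof (induction n arbitrary: u v)
  case 0
  then show ?case using C1_add(1) by (simp add: sm0)
next
  case (Suc n)
  have cu: "C1 S u" and cv: "C1 S v" using Suc.prems by (simp_all add: sm_Suc)
  have "sm n S (\<lambda>z. dx u z + dx v z)" using Suc by (simp add: sm_Suc)
  then have 1: "sm n S (dx (\<lambda>z. u z + v z))"
    by (rule sm_cong[OF assms, rotated]) (simp add: C1_add(2)[OF cu cv])
  have "sm n S (\<lambda>z. dy u z + dy v z)" using Suc by (simp add: sm_Suc)
  then have 2: "sm n S (dy (\<lambda>z. u z + v z))"
    by (rule sm_cong[OF assms, rotated]) (simp add: C1_add(3)[OF cu cv])
  show ?case using 1 2 C1_add(1)[OF cu cv] by (simp add: sm_Suc)
qed

lemma sm_mult:
  fixes u v :: "complex \<Rightarrow> 'a::real_normed_algebra"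
  assumes "open S"
  shows "sm n S u \<Longrightarrow> sm n S v \<Longrightarrow> sm n S (\<lambda>z. u z * v z)"
proof (induction n arbitrary: u v)
  case 0
  then show ?case using C1_mult(1) by (simp add: sm0)
next
  case (Suc n)
  have cu: "C1 S u" and cv: "C1 S v" using Suc.prems by (simp_all add: sm_Suc)
  have u: "sm n S u" and v: "sm n S v" using Suc.prems sm_mono le_SucI by blast+
  have "sm n S (\<lambda>z. u z * dx v z + dx u z * v z)"
    using Suc u v by (intro sm_add assms) (simp_all add: sm_Suc)
  then have 1: "sm n S (dx (\<lambda>z. u z * v z))"
    by (rule sm_cong[OF assms, rotated]) (simp add: C1_mult(2)[OF cu cv])
  have "sm n S (\<lambda>z. u z * dy v z + dy u z * v z)"
    using Suc u v by (intro sm_add assms) (simp_all add: sm_Suc)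
  then have 2: "sm n S (dy (\<lambda>z. u z * v z))"
    by (rule sm_cong[OF assms, rotated]) (simp add: C1_mult(3)[OF cu cv])
  show ?case using 1 2 C1_mult(1)[OF cu cv] by (simp add: sm_Suc)
qed

lemma sm_const:
  fixes c :: "'a::real_normed_vector"
  assumes "open S"
  shows "sm n S (\<lambda>z. c)"
proof (induction n arbitrary: c)
  case 0
  then show ?case using C1_const(1) by (simp add: sm0)
next
  case (Suc n)
  have e1: "dx (\<lambda>z. c) = (\<lambda>z. 0)" "dy (\<lambda>z. c) = (\<lambda>z. 0)" by (simp_all add: C1_const fun_eq_iff)
  show ?case using Suc[of 0] C1_const(1) by (simp add: sm_Suc e1)
qed

lemma sm_of_real:
  fixes g :: "complex \<Rightarrow> real"
  assumes "open S"
  shows "sm n S g \<Longrightarrow> sm n S (\<lambda>z. (of_real (g z) :: complex))"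
proof (induction n arbitrary: g)
  case 0
  then show ?case using C1_of_real(1) by (simp add: sm0)
next
  case (Suc n)
  have cg: "C1 S g" using Suc.prems by (simp_all add: sm_Suc)
  have "sm n S (\<lambda>z. (of_real (dx g z) :: complex))" using Suc by (simp add: sm_Suc)
  then have 1: "sm n S (dx (\<lambda>z. (of_real (g z) :: complex)))"
    by (rule sm_cong[OF assms, rotated]) (simp add: C1_of_real(2)[OF cg])
  have "sm n S (\<lambda>z. (of_real (dy g z) :: complex))" using Suc by (simp add: sm_Suc)
  then have 2: "sm n S (dy (\<lambda>z. (of_real (g z) :: complex)))"
    by (rule sm_cong[OF assms, rotated]) (simp add: C1_of_real(3)[OF cg])
  show ?case using 1 2 C1_of_real(1)[OF cg] by (simp add: sm_Suc)
qed

lemma sm_sqrt_inv: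
  fixes g :: "complex \<Rightarrow> real"
  assumes "open S"
  shows "sm n S g \<Longrightarrow> (\<And>z. z \<in> S \<Longrightarrow> g z > 0) \<Longrightarrow>
     sm n S (\<lambda>z. sqrt (g z)) \<and> sm n S (\<lambda>z. inverse (g z)) \<and> sm n S (\<lambda>z. inverse (sqrt (g z)))"
proof (induction n arbitrary: g)
  case 0
  have cg: "C1 S g" using 0 by (simp add: sm0)
  have cs: "C1 S (\<lambda>z. sqrt (g z))" by (rule C1_sqrt(1)[OF cg 0(2)])
  have nz: "\<And>z. z \<in> S \<Longrightarrow> g z \<noteq> 0" using 0(2) by force
  have snz: "\<And>z. z \<in> S \<Longrightarrow> sqrt (g z) \<noteq> 0" using 0(2) by force
  show ?case using cs C1_inverse(1)[OF cg nz] C1_inverse(1)[OF cs snz]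
    by (simp add: sm0)
next
  case (Suc n)
  have cg: "C1 S g" using Suc.prems by (simp add: sm_Suc)
  have pos: "\<And>z. z \<in> S \<Longrightarrow> g z > 0" by (rule Suc.prems(2))
  have nz: "\<And>z. z \<in> S \<Longrightarrow> g z \<noteq> 0" using pos by force
  have snz: "\<And>z. z \<in> S \<Longrightarrow> sqrt (g z) \<noteq> 0" using pos by force
  have cs: "C1 S (\<lambda>z. sqrt (g z))" by (rule C1_sqrt(1)[OF cg pos])
  have gn: "sm n S g" using Suc.prems(1) sm_mono le_SucI by blast
  have IH: "sm n S (\<lambda>z. sqrt (g z))" "sm n S (\<lambda>z. inverse (g z))" "sm n S (\<lambda>z. inverse (sqrt (g z)))"
    using Suc.IH[OF gn pos] by auto
  have dg: "sm n S (dx g)" "sm n S (dy g)" using Suc.prems(1) by (simp_all add: sm_Suc)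
  note K = sm_const[OF assms]
  note M = sm_mult[OF assms]
  have sx: "sm n S (dx (\<lambda>z. sqrt (g z)))"
    by (rule sm_cong[OF assms, rotated, OF M[OF dg(1) M[OF IH(3) K[where c="1/2::real"]]]]) (simp add: C1_sqrt(2)[OF cg pos])
  have sy: "sm n S (dy (\<lambda>z. sqrt (g z)))"
    by (rule sm_cong[OF assms, rotated, OF M[OF dg(2) M[OF IH(3) K[where c="1/2::real"]]]]) (simp add: C1_sqrt(3)[OF cg pos])
  have ix: "sm n S (dx (\<lambda>z. inverse (g z)))"
    by (rule sm_cong[OF assms, rotated, OF M[OF K[where c="-1::real"] M[OF dg(1) M[OF IH(2) IH(2)]]]]) (simp add: C1_inverse(2)[OF cg nz])
  have iy: "sm n S (dy (\<lambda>z. inverse (g z)))"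
    by (rule sm_cong[OF assms, rotated, OF M[OF K[where c="-1::real"] M[OF dg(2) M[OF IH(2) IH(2)]]]]) (simp add: C1_inverse(3)[OF cg nz])
  have jx: "sm n S (dx (\<lambda>z. inverse (sqrt (g z))))"
    by (rule sm_cong[OF assms, rotated, OF M[OF K[where c="-1::real"] M[OF sx M[OF IH(3) IH(3)]]]]) (simp add: C1_inverse(2)[OF cs snz])
  have jy: "sm n S (dy (\<lambda>z. inverse (sqrt (g z))))"
    by (rule sm_cong[OF assms, rotated, OF M[OF K[where c="-1::real"] M[OF sy M[OF IH(3) IH(3)]]]]) (simp add: C1_inverse(3)[OF cs snz])
  show ?case using sx sy ix iy jx jy cs C1_inverse(1)[OF cg nz] C1_inverse(1)[OF cs snz]
    by (simp add: sm_Suc)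
qed



lemma mvt_bound:
  fixes \<phi> \<phi>' :: "real \<Rightarrow> real"
  assumes der: "\<And>s. \<bar>s\<bar> \<le> \<bar>T\<bar> \<Longrightarrow> (\<phi> has_real_derivative \<phi>' s) (at s)"
    and bd: "\<And>s. \<bar>s\<bar> \<le> \<bar>T\<bar> \<Longrightarrow> \<bar>\<phi>' s - c\<bar> \<le> e"
  shows "\<bar>\<phi> T - \<phi> 0 - T * c\<bar> \<le> e * \<bar>T\<bar>"
proof -
  define \<psi> where "\<psi> s = \<phi> s - s * c" for s
  have d\<psi>: "(\<psi> has_real_derivative (\<phi>' s - c)) (at s)" if "\<bar>s\<bar> \<le> \<bar>T\<bar>" for s
    unfolding \<psi>_def using der[OF that] by (auto intro!: derivative_eq_intros)
  have eq: "\<phi> T - \<phi> 0 - T * c = \<psi> T - \<psi> 0" by (simp add: \<psi>_def)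
  show ?thesis
  proof (cases "T > 0")
    case True
    obtain \<xi> where "0 < \<xi>" "\<xi> < T" "\<psi> T - \<psi> 0 = (T - 0) * (\<phi>' \<xi> - c)"
      using MVT2[OF True, of \<psi> "\<lambda>s. \<phi>' s - c"] d\<psi> True by force
    moreover have "\<bar>\<phi>' \<xi> - c\<bar> \<le> e" using bd \<open>0 < \<xi>\<close> \<open>\<xi> < T\<close> by auto
    ultimately show ?thesis unfolding eq using True by (simp add: abs_mult mult.commute mult_right_mono)
  next
    case False
    show ?thesis
    proof (cases "T = 0")
      case True then show ?thesis by simp
    next
      case False
      then have T: "T < 0" using \<open>\<not> T > 0\<close> by simp
      obtain \<xi> where "T < \<xi>" "\<xi> < 0" "\<psi> 0 - \<psi> T = (0 - T) * (\<phi>' \<xi> - c)"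
        using MVT2[OF T, of \<psi> "\<lambda>s. \<phi>' s - c"] d\<psi> T by force
      moreover have "\<bar>\<phi>' \<xi> - c\<bar> \<le> e" using bd \<open>T < \<xi>\<close> \<open>\<xi> < 0\<close> by auto
      ultimately have "\<psi> T - \<psi> 0 = T * (\<phi>' \<xi> - c)" "\<bar>\<phi>' \<xi> - c\<bar> \<le> e"
        by (auto simp: algebra_simps)
      then have "\<bar>\<psi> T - \<psi> 0\<bar> = \<bar>T\<bar> * \<bar>\<phi>' \<xi> - c\<bar>" by (simp add: abs_mult)
      also have "\<dots> \<le> \<bar>T\<bar> * e" using \<open>\<bar>\<phi>' \<xi> - c\<bar> \<le> e\<close> by (intro mult_left_mono) auto
      finally show ?thesis unfolding eq by (simp add: mult.commute)
    qed
  qed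
qed

lemma second_deriv_test:
  fixes \<phi> \<phi>' :: "real \<Rightarrow> real"
  assumes d: "d > 0"
    and der: "\<And>t. \<bar>t\<bar> < d \<Longrightarrow> (\<phi> has_real_derivative \<phi>' t) (at t)"
    and der2: "(\<phi>' has_real_derivative l) (at 0)"
    and mx: "\<And>t. \<bar>t\<bar> < d \<Longrightarrow> \<phi> t \<le> \<phi> 0"
  shows "l \<le> 0"
proof (rule ccontr)
  assume "\<not> l \<le> 0"
  then have l: "l > 0" by simp
  have z: "\<phi>' 0 = 0"
    by (rule DERIV_local_max[OF der[of 0] d]) (use mx d in auto)
  obtain d' where d': "d' > 0" "\<And>h. h > 0 \<Longrightarrow> h < d' \<Longrightarrow> \<phi>' 0 < \<phi>' (0 + h)"
    using DERIV_pos_inc_right[OF der2 l] by blast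
  define h0 where "h0 = min d d' / 2"
  have h0: "0 < h0" "h0 < d" "h0 < d'" using d d' by (auto simp: h0_def)
  obtain \<xi> where \<xi>: "0 < \<xi>" "\<xi> < h0" "\<phi> h0 - \<phi> 0 = (h0 - 0) * \<phi>' \<xi>"
    using MVT2[OF h0(1), of \<phi> \<phi>'] der h0 by force
  have "\<phi>' \<xi> > 0" using d'(2)[of \<xi>] \<xi> h0 z by simp
  then have "h0 * \<phi>' \<xi> > 0" using h0 by (simp add: mult_pos_pos)
  then have "\<phi> h0 > \<phi> 0" using \<xi>(3) by simp
  moreover have "\<phi> h0 \<le> \<phi> 0" using mx h0 by simp
  ultimately show False by simp
qed

lemma frechet_partials:
  fixes w wx wy :: "complex \<Rightarrow> real"
  assumes S: "open S" and z: "z \<in> S"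
    and cx: "continuous_on S wx" and cy: "continuous_on S wy"
    and dwx: "\<And>y. y \<in> S \<Longrightarrow> ((\<lambda>t. w (y + of_real t)) has_real_derivative wx y) (at 0)"
    and dwy: "\<And>y. y \<in> S \<Longrightarrow> ((\<lambda>t. w (y + \<i> * of_real t)) has_real_derivative wy y) (at 0)"
  shows "(w has_derivative (\<lambda>h. Re h * wx z + Im h * wy z)) (at z)"
  unfolding has_derivative_at_alt
proof (intro conjI allI impI)
  show "bounded_linear (\<lambda>h. Re h * wx z + Im h * wy z)"
    by (intro bounded_linear_add bounded_linear_mult_const bounded_linear_Re bounded_linear_Im)
next
  fix e :: real assume e: "e > 0"
  obtain d0 where d0: "d0 > 0" "ball z d0 \<subseteq> S" using S z open_contains_ball by blast
  obtain d1 where d1: "d1 > 0" "\<And>y. y \<in> S \<Longrightarrow> dist y z < d1 \<Longrightarrow> dist (wx y) (wx z) < e/2"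
    using cx z e unfolding continuous_on_iff by (metis half_gt_zero)
  obtain d2 where d2: "d2 > 0" "\<And>y. y \<in> S \<Longrightarrow> dist y z < d2 \<Longrightarrow> dist (wy y) (wy z) < e/2"
    using cy z e unfolding continuous_on_iff by (metis half_gt_zero)
  define d where "d = min d0 (min d1 d2)"
  have d: "d > 0" using d0 d1 d2 by (simp add: d_def)
  have inS: "y \<in> S" and c1: "\<bar>wx y - wx z\<bar> \<le> e/2" and c2: "\<bar>wy y - wy z\<bar> \<le> e/2"
    if "dist y z < d" for y
  proof -
    show "y \<in> S" using that d0 by (auto simp: d_def dist_commute)
    then show "\<bar>wx y - wx z\<bar> \<le> e/2" "\<bar>wy y - wy z\<bar> \<le> e/2"
      using d1(2)[of y] d2(2)[of y] that by (auto simp: d_def dist_real_def)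
  qed
  show "\<exists>d>0. \<forall>y. norm (y - z) < d \<longrightarrow> norm (w y - w z - (Re (y - z) * wx z + Im (y - z) * wy z)) \<le> e * norm (y - z)"
  proof (intro exI[of _ d] conjI allI impI d)
    fix y assume yd: "norm (y - z) < d"
    define h where "h = y - z"
    define m where "m = z + of_real (Re h)"
    have A: "\<bar>w m - w z - Re h * wx z\<bar> \<le> e/2 * \<bar>Re h\<bar>"
      unfolding m_def
    proof (rule mvt_bound[where \<phi>="\<lambda>s. w (z + of_real s)" and \<phi>'="\<lambda>s. wx (z + of_real s)", simplified])
      fix s :: real assume s: "\<bar>s\<bar> \<le> \<bar>Re h\<bar>"
      have ds: "dist (z + of_real s) z < d"
        using s abs_Re_le_cmod[of h] yd by (simp add: dist_norm h_def)
      have "((\<lambda>t. w ((z + of_real s) + of_real t)) has_real_derivative wx (z + of_real s)) (at 0)"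
        by (rule dwx[OF inS[OF ds]])
      then show "((\<lambda>s. w (z + of_real s)) has_real_derivative wx (z + of_real s)) (at s)"
        using DERIV_shift[of "\<lambda>s. w (z + of_real s)" _ 0 s] by (simp add: algebra_simps)
      show "\<bar>wx (z + of_real s) - wx z\<bar> \<le> e/2" by (rule c1[OF ds])
    qed
    have B: "\<bar>w (m + \<i> * of_real (Im h)) - w m - Im h * wy z\<bar> \<le> e/2 * \<bar>Im h\<bar>"
    proof (rule mvt_bound[where \<phi>="\<lambda>s. w (m + \<i> * of_real s)" and \<phi>'="\<lambda>s. wy (m + \<i> * of_real s)", simplified])
      fix s :: real assume s: "\<bar>s\<bar> \<le> \<bar>Im h\<bar>"
      have "cmod (of_real (Re h) + \<i> * of_real s) = sqrt ((Re h)^2 + s^2)"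
        by (simp add: cmod_def)
      also have "\<dots> \<le> sqrt ((Re h)^2 + (Im h)^2)"
        using s by (intro real_sqrt_le_mono add_left_mono) (simp add: abs_le_square_iff)
      also have "\<dots> = cmod h" by (simp add: cmod_def)
      finally have "cmod (of_real (Re h) + \<i> * of_real s) < d" using yd by (simp add: h_def)
      then have ds: "dist (m + \<i> * of_real s) z < d" by (simp add: dist_norm m_def add.commute add.left_commute)
      have "((\<lambda>t. w ((m + \<i> * of_real s) + \<i> * of_real t)) has_real_derivative wy (m + \<i> * of_real s)) (at 0)"
        by (rule dwy[OF inS[OF ds]])
      then show "((\<lambda>s. w (m + \<i> * of_real s)) has_real_derivative wy (m + \<i> * of_real s)) (at s)"
        using DERIV_shift[of "\<lambda>s. w (m + \<i> * of_real s)" _ 0 s] by (simp add: algebra_simps)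
      show "\<bar>wy (m + \<i> * of_real s) - wy z\<bar> \<le> e/2" by (rule c2[OF ds])
    qed
    have my: "m + \<i> * of_real (Im h) = y" unfolding m_def h_def by (simp add: complex_eq_iff)
    have "\<bar>w y - w z - (Re h * wx z + Im h * wy z)\<bar> \<le> e/2 * \<bar>Re h\<bar> + e/2 * \<bar>Im h\<bar>"
      using A B unfolding my by linarith
    also have "\<dots> \<le> e/2 * cmod h + e/2 * cmod h"
      using e abs_Re_le_cmod abs_Im_le_cmod by (intro add_mono mult_left_mono) auto
    finally show "norm (w y - w z - (Re (y - z) * wx z + Im (y - z) * wy z)) \<le> e * norm (y - z)"
      by (simp add: h_def)
  qed
qed



lemma hvd_Re:
  "(f has_vector_derivative d) F \<Longrightarrow> ((\<lambda>t. Re (f t)) has_real_derivative Re d) F"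
  using bounded_linear.has_vector_derivative[OF bounded_linear_Re, of f d F]
  by (simp add: has_real_derivative_iff_has_vector_derivative)

lemma chain_line:
  fixes w :: "complex \<Rightarrow> real"
  assumes "(w has_derivative (\<lambda>h. Re h * a + Im h * b)) (at (q + t *\<^sub>R v))"
  shows "((\<lambda>t. w (q + t *\<^sub>R v)) has_real_derivative (Re v * a + Im v * b)) (at t)"
proof -
  have p: "((\<lambda>t. q + t *\<^sub>R v) has_derivative (\<lambda>s. s *\<^sub>R v)) (at t)"
    by (auto intro!: derivative_eq_intros)
  have H: "((\<lambda>t. w (q + t *\<^sub>R v)) has_derivative (\<lambda>s. Re (s *\<^sub>R v) * a + Im (s *\<^sub>R v) * b)) (at t)"
    using has_derivative_compose[OF p assms] by simp
  have "((\<lambda>t. w (q + t *\<^sub>R v)) has_derivative (*) (Re v * a + Im v * b)) (at t)"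
    by (rule has_derivative_eq_rhs[OF H]) (simp add: fun_eq_iff algebra_simps)
  then show ?thesis by (simp add: has_field_derivative_def)
qed

lemma C1_Re_x:
  assumes "C1 S G" "z \<in> S"
  shows "((\<lambda>t. Re (G (z + of_real t))) has_real_derivative Re (dx G z)) (at 0)"
  using hvd_Re[OF C1D(2)[OF assms]] .

lemma C1_Re_y:
  assumes "C1 S G" "z \<in> S"
  shows "((\<lambda>t. Re (G (z + \<i> * of_real t))) has_real_derivative Re (dy G z)) (at 0)"
  using hvd_Re[OF C1D(3)[OF assms]] .

lemma C1_Re_frechet:
  fixes G :: "complex \<Rightarrow> complex"
  assumes S: "open S" "z \<in> S" and G: "C1 S G" "C1 S (dx G)" "C1 S (dy G)"
  shows "((\<lambda>z. Re (G z)) has_derivative (\<lambda>h. Re h * Re (dx G z) + Im h * Re (dy G z))) (at z)"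
proof (rule frechet_partials[OF S, where wx="\<lambda>z. Re (dx G z)" and wy="\<lambda>z. Re (dy G z)"])
  show "continuous_on S (\<lambda>z. Re (dx G z))" using C1D(1)[OF G(2) S(2)] by (intro continuous_intros)
  show "continuous_on S (\<lambda>z. Re (dy G z))" using C1D(1)[OF G(3) S(2)] by (intro continuous_intros)
  show "\<And>y. y \<in> S \<Longrightarrow> ((\<lambda>t. Re (G (y + complex_of_real t))) has_real_derivative Re (dx G y)) (at 0)"
    using C1_Re_x[OF G(1)] .
  show "\<And>y. y \<in> S \<Longrightarrow> ((\<lambda>t. Re (G (y + \<i> * complex_of_real t))) has_real_derivative Re (dy G y)) (at 0)"
    using C1_Re_y[OF G(1)] .
qed

lemma max_second_order:
  fixes G :: "complex \<Rightarrow> complex"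
  assumes S: "open S" and sm2: "sm 2 S G" and q: "q \<in> S" and r0: "r0 > 0" "ball q r0 \<subseteq> S"
    and mx: "\<And>z. z \<in> ball q r0 \<Longrightarrow> Re (G z) \<le> Re (G q)"
  shows "Re (dx G q) = 0" "Re (dy G q) = 0"
    "\<alpha>^2 * Re (dx (dx G) q) + \<alpha> * \<beta> * (Re (dy (dx G) q) + Re (dx (dy G) q)) + \<beta>^2 * Re (dy (dy G) q) \<le> 0"
proof -
  have sm1x: "sm 1 S (dx G)" and sm1y: "sm 1 S (dy G)" using sm2 by (simp_all add: sm_Suc numeral_2_eq_2)
  have cG: "C1 S G" using sm2 sm_C1 by blast
  have cx: "C1 S (dx G)" and cy: "C1 S (dy G)" using sm1x sm1y sm_C1 by blast+
  have cxx: "C1 S (dx (dx G))" and cxy: "C1 S (dy (dx G))" using sm1x by (simp_all add: sm_Suc sm0)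
  have cyx: "C1 S (dx (dy G))" and cyy: "C1 S (dy (dy G))" using sm1y by (simp_all add: sm_Suc sm0)
  show "Re (dx G q) = 0"
  proof (rule DERIV_local_max[OF C1_Re_x[OF cG q] r0(1)], intro allI impI)
    fix y :: real assume "\<bar>0 - y\<bar> < r0"
    then have "q + of_real y \<in> ball q r0" by (simp add: dist_norm)
    then show "Re (G (q + of_real y)) \<le> Re (G (q + of_real 0))" using mx by simp
  qed
  show "Re (dy G q) = 0"
  proof (rule DERIV_local_max[OF C1_Re_y[OF cG q] r0(1)], intro allI impI)
    fix y :: real assume "\<bar>0 - y\<bar> < r0"
    then have "q + \<i> * of_real y \<in> ball q r0" by (simp add: dist_norm norm_mult)
    then show "Re (G (q + \<i> * of_real y)) \<le> Re (G (q + \<i> * of_real 0))" using mx by simp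
  qed
  define v where "v = Complex \<alpha> \<beta>"
  define \<rho> where "\<rho> = r0 / (cmod v + 1)"
  have vp: "cmod v + 1 > 0" using norm_ge_zero[of v] by linarith
  have \<rho>: "\<rho> > 0" using r0 vp by (simp add: \<rho>_def)
  have inb: "q + t *\<^sub>R v \<in> ball q r0" if "\<bar>t\<bar> < \<rho>" for t
  proof -
    have "\<bar>t\<bar> * cmod v \<le> \<bar>t\<bar> * (cmod v + 1)" by (simp add: mult_left_mono)
    also have "\<dots> < \<rho> * (cmod v + 1)" using that vp by (intro mult_strict_right_mono) auto
    also have "\<dots> = r0" using vp by (simp add: \<rho>_def)
    finally show ?thesis by (simp add: dist_norm)
  qed
  define \<phi>' where "\<phi>' t = Re v * Re (dx G (q + t *\<^sub>R v)) + Im v * Re (dy G (q + t *\<^sub>R v))" for t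
  have d1: "((\<lambda>t. Re (G (q + t *\<^sub>R v))) has_real_derivative \<phi>' t) (at t)" if "\<bar>t\<bar> < \<rho>" for t
    unfolding \<phi>'_def
    by (rule chain_line, rule C1_Re_frechet[OF S _ cG cx cy]) (use inb[OF that] r0 in auto)
  have fx: "((\<lambda>t. Re (dx G (q + t *\<^sub>R v))) has_real_derivative Re v * Re (dx (dx G) q) + Im v * Re (dy (dx G) q)) (at 0)"
    by (rule chain_line, simp, rule C1_Re_frechet[OF S q cx cxx cxy])
  have fy: "((\<lambda>t. Re (dy G (q + t *\<^sub>R v))) has_real_derivative Re v * Re (dx (dy G) q) + Im v * Re (dy (dy G) q)) (at 0)"
    by (rule chain_line, simp, rule C1_Re_frechet[OF S q cy cyx cyy])
  have d2: "(\<phi>' has_real_derivative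
      Re v * (Re v * Re (dx (dx G) q) + Im v * Re (dy (dx G) q)) + Im v * (Re v * Re (dx (dy G) q) + Im v * Re (dy (dy G) q))) (at 0)"
    unfolding \<phi>'_def[abs_def] by (intro DERIV_add DERIV_cmult fx fy)
  have "Re v * (Re v * Re (dx (dx G) q) + Im v * Re (dy (dx G) q)) + Im v * (Re v * Re (dx (dy G) q) + Im v * Re (dy (dy G) q)) \<le> 0"
  proof (rule second_deriv_test[OF \<rho> d1 d2])
    fix t :: real assume "\<bar>t\<bar> < \<rho>"
    then show "Re (G (q + t *\<^sub>R v)) \<le> Re (G (q + 0 *\<^sub>R v))" using mx inb by simp
  qed
  then show "\<alpha>^2 * Re (dx (dx G) q) + \<alpha> * \<beta> * (Re (dy (dx G) q) + Re (dx (dy G) q)) + \<beta>^2 * Re (dy (dy G) q) \<le> 0"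
    by (simp add: v_def power2_eq_square algebra_simps)
qed



definition LX :: "(complex \<Rightarrow> real) \<Rightarrow> (complex \<Rightarrow> real) \<Rightarrow> (complex \<Rightarrow> real) \<Rightarrow> (complex \<Rightarrow> complex) \<Rightarrow> complex \<Rightarrow> complex" where
  "LX g11 g12 g22 f = (\<lambda>w. complex_of_real (sqrt (gdet g11 g12 g22 w)) *
     (complex_of_real (g22 w / gdet g11 g12 g22 w) * dx f w - complex_of_real (g12 w / gdet g11 g12 g22 w) * dy f w))"

definition LY :: "(complex \<Rightarrow> real) \<Rightarrow> (complex \<Rightarrow> real) \<Rightarrow> (complex \<Rightarrow> real) \<Rightarrow> (complex \<Rightarrow> complex) \<Rightarrow> complex \<Rightarrow> complex" where
  "LY g11 g12 g22 f = (\<lambda>w. complex_of_real (sqrt (gdet g11 g12 g22 w)) *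
     (complex_of_real (- g12 w / gdet g11 g12 g22 w) * dx f w + complex_of_real (g11 w / gdet g11 g12 g22 w) * dy f w))"

lemma lap_eq: "laplacian g11 g12 g22 f = (\<lambda>z. complex_of_real (1 / sqrt (gdet g11 g12 g22 z)) *
   (dx (LX g11 g12 g22 f) z + dy (LY g11 g12 g22 f) z))"
  unfolding laplacian_def LX_def LY_def Let_def by (rule refl)

lemma C1_diff:
  fixes u v :: "complex \<Rightarrow> 'a::real_normed_vector"
  assumes "C1 S u" "C1 S v"
  shows "C1 S (\<lambda>z. u z - v z)" "\<And>z. z \<in> S \<Longrightarrow> dx (\<lambda>z. u z - v z) z = dx u z - dx v z"
     "\<And>z. z \<in> S \<Longrightarrow> dy (\<lambda>z. u z - v z) z = dy u z - dy v z"
proof -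
  have c: "continuous_on S (\<lambda>z. u z - v z)"
    using assms unfolding C1_def by (intro continuous_intros) auto
  note r = C1_intro[OF c, of "\<lambda>z. dx u z - dx v z" "\<lambda>z. dy u z - dy v z"]
  have x: "((\<lambda>t::real. u (z + of_real t) - v (z + of_real t)) has_vector_derivative dx u z - dx v z) (at 0)"
    if "z \<in> S" for z using C1D[OF assms(1) that] C1D[OF assms(2) that] by (intro derivative_intros)
  have y: "((\<lambda>t::real. u (z + \<i> * of_real t) - v (z + \<i> * of_real t)) has_vector_derivative dy u z - dy v z) (at 0)"
    if "z \<in> S" for z using C1D[OF assms(1) that] C1D[OF assms(2) that] by (intro derivative_intros)
  show "C1 S (\<lambda>z. u z - v z)" "\<And>z. z \<in> S \<Longrightarrow> dx (\<lambda>z. u z - v z) z = dx u z - dx v z"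
     "\<And>z. z \<in> S \<Longrightarrow> dy (\<lambda>z. u z - v z) z = dy u z - dy v z"
    using r[OF x y] by auto
qed

lemma sm_diff:
  fixes u v :: "complex \<Rightarrow> complex"
  assumes "open S" "sm n S u" "sm n S v"
  shows "sm n S (\<lambda>z. u z - v z)"
proof -
  have "sm n S (\<lambda>z. u z + (-1) * v z)"
    by (intro sm_add sm_mult sm_const assms)
  then show ?thesis by simp
qed

lemma metric_facts:
  assumes S: "open S" and rm: "riem_metric_on S g11 g12 g22"
  shows "sm n S g11" "sm n S g12" "sm n S g22"
    "\<And>z. z \<in> S \<Longrightarrow> gdet g11 g12 g22 z > 0" "\<And>z. z \<in> S \<Longrightarrow> g11 z > 0" "\<And>z. z \<in> S \<Longrightarrow> g22 z > 0"
    "sm n S (gdet g11 g12 g22)"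
    "sm n S (\<lambda>w. sqrt (gdet g11 g12 g22 w))" "sm n S (\<lambda>w. 1 / sqrt (gdet g11 g12 g22 w))"
    "sm n S (\<lambda>w. g22 w / gdet g11 g12 g22 w)" "sm n S (\<lambda>w. g12 w / gdet g11 g12 g22 w)"
    "sm n S (\<lambda>w. - g12 w / gdet g11 g12 g22 w)" "sm n S (\<lambda>w. g11 w / gdet g11 g12 g22 w)"
proof -
  show g: "sm n S g11" "sm n S g12" "sm n S g22"
    using rm unfolding riem_metric_on_def smooth_on_sm by auto
  show pos: "\<And>z. z \<in> S \<Longrightarrow> gdet g11 g12 g22 z > 0" "\<And>z. z \<in> S \<Longrightarrow> g11 z > 0"
    using rm unfolding riem_metric_on_def gdet_def by auto
  show "\<And>z. z \<in> S \<Longrightarrow> g22 z > 0"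
  proof -
    fix z assume z: "z \<in> S"
    have "g11 z * g22 z > (g12 z)^2" using rm z unfolding riem_metric_on_def by auto
    then have "g11 z * g22 z > 0" by (smt (verit) zero_le_power2)
    then show "g22 z > 0" using pos(2)[OF z] by (simp add: zero_less_mult_iff)
  qed
  have de: "gdet g11 g12 g22 = (\<lambda>z. g11 z * g22 z + (-1) * (g12 z * g12 z))"
    by (simp add: fun_eq_iff gdet_def power2_eq_square)
  show D: "sm n S (gdet g11 g12 g22)" unfolding de by (intro sm_add sm_mult sm_const S g)
  note P = sm_sqrt_inv[OF S D pos(1)]
  show "sm n S (\<lambda>w. sqrt (gdet g11 g12 g22 w))" using P by blast
  show "sm n S (\<lambda>w. 1 / sqrt (gdet g11 g12 g22 w))" using P by (simp add: divide_inverse)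
  show "sm n S (\<lambda>w. g22 w / gdet g11 g12 g22 w)" "sm n S (\<lambda>w. g12 w / gdet g11 g12 g22 w)"
    "sm n S (\<lambda>w. g11 w / gdet g11 g12 g22 w)"
    unfolding divide_inverse using P by (intro sm_mult S g; blast)+
  have "sm n S (\<lambda>w. (-1) * (g12 w * inverse (gdet g11 g12 g22 w)))"
    using P by (intro sm_mult S g sm_const; blast)
  then show "sm n S (\<lambda>w. - g12 w / gdet g11 g12 g22 w)" by (simp add: divide_inverse)
qed

lemma sm_LXY:
  assumes S: "open S" and rm: "riem_metric_on S g11 g12 g22" and f: "sm (Suc n) S f"
  shows "sm n S (LX g11 g12 g22 f)" "sm n S (LY g11 g12 g22 f)"
proof -
  note M = metric_facts[OF S rm, of n]
  have fx: "sm n S (dx f)" "sm n S (dy f)" using f by (simp_all add: sm_Suc)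
  show "sm n S (LX g11 g12 g22 f)" unfolding LX_def
    by (intro sm_mult sm_diff sm_of_real S M fx)
  show "sm n S (LY g11 g12 g22 f)" unfolding LY_def
    by (intro sm_mult sm_add sm_of_real S M fx)
qed

lemma sm_lap:
  assumes S: "open S" and rm: "riem_metric_on S g11 g12 g22" and f: "sm (Suc (Suc n)) S f"
  shows "sm n S (laplacian g11 g12 g22 f)"
proof -
  note M = metric_facts[OF S rm, of n]
  have "sm (Suc n) S (LX g11 g12 g22 f)" "sm (Suc n) S (LY g11 g12 g22 f)" using sm_LXY[OF S rm f] by auto
  then have "sm n S (dx (LX g11 g12 g22 f))" "sm n S (dy (LY g11 g12 g22 f))" by (simp_all add: sm_Suc)
  then show ?thesis unfolding lap_eq by (intro sm_mult sm_add sm_of_real S M)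
qed



lemma C1_lin:
  fixes u v :: "complex \<Rightarrow> complex"
  assumes "C1 S u" "C1 S v"
  shows "C1 S (\<lambda>w. a * u w + b * v w)"
    "\<And>z. z \<in> S \<Longrightarrow> dx (\<lambda>w. a * u w + b * v w) z = a * dx u z + b * dx v z"
    "\<And>z. z \<in> S \<Longrightarrow> dy (\<lambda>w. a * u w + b * v w) z = a * dy u z + b * dy v z"
proof -
  have a: "C1 S (\<lambda>w. a * u w)" "C1 S (\<lambda>w. b * v w)"
    using C1_mult(1)[OF C1_const(1) assms(1)] C1_mult(1)[OF C1_const(1) assms(2)] by auto
  show "C1 S (\<lambda>w. a * u w + b * v w)" using C1_add(1)[OF a] .
  show "\<And>z. z \<in> S \<Longrightarrow> dx (\<lambda>w. a * u w + b * v w) z = a * dx u z + b * dx v z"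
    using C1_add(2)[OF a] C1_mult(2)[OF C1_const(1) assms(1)] C1_mult(2)[OF C1_const(1) assms(2)]
    by (simp add: C1_const)
  show "\<And>z. z \<in> S \<Longrightarrow> dy (\<lambda>w. a * u w + b * v w) z = a * dy u z + b * dy v z"
    using C1_add(3)[OF a] C1_mult(3)[OF C1_const(1) assms(1)] C1_mult(3)[OF C1_const(1) assms(2)]
    by (simp add: C1_const)
qed

lemma lap_lin:
  fixes u v :: "complex \<Rightarrow> complex"
  assumes S: "open S" and rm: "riem_metric_on S g11 g12 g22" and u: "sm 2 S u" and v: "sm 2 S v" and z: "z \<in> S"
  shows "laplacian g11 g12 g22 (\<lambda>w. a * u w + b * v w) z = a * laplacian g11 g12 g22 u z + b * laplacian g11 g12 g22 v z"
proof -
  have cu: "C1 S u" and cv: "C1 S v" using u v sm_C1 by blast+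
  have eX: "\<forall>w\<in>S. LX g11 g12 g22 (\<lambda>w. a * u w + b * v w) w = a * LX g11 g12 g22 u w + b * LX g11 g12 g22 v w"
    unfolding LX_def using C1_lin(2,3)[OF cu cv] by (simp add: algebra_simps)
  have eY: "\<forall>w\<in>S. LY g11 g12 g22 (\<lambda>w. a * u w + b * v w) w = a * LY g11 g12 g22 u w + b * LY g11 g12 g22 v w"
    unfolding LY_def using C1_lin(2,3)[OF cu cv] by (simp add: algebra_simps)
  have u1: "sm (Suc 1) S u" and v1: "sm (Suc 1) S v" using u v by (simp_all add: numeral_2_eq_2)
  have cX: "C1 S (LX g11 g12 g22 u)" "C1 S (LX g11 g12 g22 v)" "C1 S (LY g11 g12 g22 u)" "C1 S (LY g11 g12 g22 v)"
    using sm_LXY[OF S rm u1] sm_LXY[OF S rm v1] sm_C1 by blast+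
  have "dx (LX g11 g12 g22 (\<lambda>w. a * u w + b * v w)) z = dx (\<lambda>w. a * LX g11 g12 g22 u w + b * LX g11 g12 g22 v w) z"
    by (rule dx_local[OF S z eX])
  also have "\<dots> = a * dx (LX g11 g12 g22 u) z + b * dx (LX g11 g12 g22 v) z"
    by (rule C1_lin(2)[OF cX(1,2) z])
  finally have 1: "dx (LX g11 g12 g22 (\<lambda>w. a * u w + b * v w)) z = a * dx (LX g11 g12 g22 u) z + b * dx (LX g11 g12 g22 v) z" .
  have "dy (LY g11 g12 g22 (\<lambda>w. a * u w + b * v w)) z = dy (\<lambda>w. a * LY g11 g12 g22 u w + b * LY g11 g12 g22 v w) z"
    by (rule dy_local[OF S z eY])
  also have "\<dots> = a * dy (LY g11 g12 g22 u) z + b * dy (LY g11 g12 g22 v) z"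
    by (rule C1_lin(3)[OF cX(3,4) z])
  finally have 2: "dy (LY g11 g12 g22 (\<lambda>w. a * u w + b * v w)) z = a * dy (LY g11 g12 g22 u) z + b * dy (LY g11 g12 g22 v) z" .
  show ?thesis unfolding lap_eq using 1 2 by (simp add: algebra_simps)
qed

lemma lap_const: "laplacian g11 g12 g22 (\<lambda>w. c) z = 0"
proof -
  have "LX g11 g12 g22 (\<lambda>w. c) = (\<lambda>w. 0)" "LY g11 g12 g22 (\<lambda>w. c) = (\<lambda>w. 0)"
    unfolding LX_def LY_def by (simp_all add: C1_const fun_eq_iff)
  then show ?thesis unfolding lap_eq by (simp add: C1_const)
qed

lemma lap_crit:
  fixes G :: "complex \<Rightarrow> complex"
  assumes S: "open S" and rm: "riem_metric_on S g11 g12 g22" and G: "sm 2 S G" and q: "q \<in> S"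
    and cx: "Re (dx G q) = 0" and cy: "Re (dy G q) = 0"
  shows "Re (laplacian g11 g12 g22 G q) =
     (g22 q / gdet g11 g12 g22 q) * Re (dx (dx G) q)
     - (g12 q / gdet g11 g12 g22 q) * (Re (dy (dx G) q) + Re (dx (dy G) q))
     + (g11 q / gdet g11 g12 g22 q) * Re (dy (dy G) q)"
proof -
  note M = metric_facts[OF S rm, of 1]
  define D where "D = gdet g11 g12 g22"
  define s where "s = (\<lambda>w. sqrt (D w))"
  define A where "A = (\<lambda>w. g22 w / D w)"
  define B where "B = (\<lambda>w. g12 w / D w)"
  define B' where "B' = (\<lambda>w. - g12 w / D w)"
  define C where "C = (\<lambda>w. g11 w / D w)"
  have rs: "C1 S s" "C1 S A" "C1 S B" "C1 S B'" "C1 S C"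
    using M sm_C1 unfolding s_def A_def B_def B'_def C_def D_def by blast+
  have cs: "C1 S (\<lambda>w. complex_of_real (s w))" "C1 S (\<lambda>w. complex_of_real (A w))"
    "C1 S (\<lambda>w. complex_of_real (B w))" "C1 S (\<lambda>w. complex_of_real (B' w))" "C1 S (\<lambda>w. complex_of_real (C w))"
    using C1_of_real(1) rs by blast+
  have G1: "sm (Suc 1) S G" using G by (simp add: numeral_2_eq_2)
  have cG: "C1 S (dx G)" "C1 S (dy G)" using G1 sm_C1 by (simp_all add: sm_Suc)
  have X: "LX g11 g12 g22 G = (\<lambda>w. complex_of_real (s w) * (complex_of_real (A w) * dx G w - complex_of_real (B w) * dy G w))"
    unfolding LX_def s_def A_def B_def D_def by simp
  have Y: "LY g11 g12 g22 G = (\<lambda>w. complex_of_real (s w) * (complex_of_real (B' w) * dx G w + complex_of_real (C w) * dy G w))"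
    unfolding LY_def s_def B'_def C_def D_def by simp
  have i1: "C1 S (\<lambda>w. complex_of_real (A w) * dx G w)" "C1 S (\<lambda>w. complex_of_real (B w) * dy G w)"
    "C1 S (\<lambda>w. complex_of_real (B' w) * dx G w)" "C1 S (\<lambda>w. complex_of_real (C w) * dy G w)"
    using C1_mult(1) cs cG by blast+
  have i2: "C1 S (\<lambda>w. complex_of_real (A w) * dx G w - complex_of_real (B w) * dy G w)"
    using C1_diff(1)[OF i1(1,2)] .
  have i3: "C1 S (\<lambda>w. complex_of_real (B' w) * dx G w + complex_of_real (C w) * dy G w)"
    using C1_add(1)[OF i1(3,4)] .
  have dX: "dx (LX g11 g12 g22 G) q = complex_of_real (s q) * ((complex_of_real (A q) * dx (dx G) q + complex_of_real (dx A q) * dx G q)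
       - (complex_of_real (B q) * dx (dy G) q + complex_of_real (dx B q) * dy G q))
     + complex_of_real (dx s q) * (complex_of_real (A q) * dx G q - complex_of_real (B q) * dy G q)"
    unfolding X using C1_mult(2)[OF cs(1) i2 q] C1_diff(2)[OF i1(1,2) q] C1_mult(2)[OF cs(2) cG(1) q]
      C1_mult(2)[OF cs(3) cG(2) q] C1_of_real(2)[OF rs(1) q] C1_of_real(2)[OF rs(2) q] C1_of_real(2)[OF rs(3) q]
    by simp
  have dY: "dy (LY g11 g12 g22 G) q = complex_of_real (s q) * ((complex_of_real (B' q) * dy (dx G) q + complex_of_real (dy B' q) * dx G q)
       + (complex_of_real (C q) * dy (dy G) q + complex_of_real (dy C q) * dy G q))
     + complex_of_real (dy s q) * (complex_of_real (B' q) * dx G q + complex_of_real (C q) * dy G q)"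
    unfolding Y using C1_mult(3)[OF cs(1) i3 q] C1_add(3)[OF i1(3,4) q] C1_mult(3)[OF cs(4) cG(1) q]
      C1_mult(3)[OF cs(5) cG(2) q] C1_of_real(3)[OF rs(1) q] C1_of_real(3)[OF rs(4) q] C1_of_real(3)[OF rs(5) q]
    by simp
  have sq: "s q > 0" using metric_facts(4)[OF S rm q] unfolding s_def D_def by simp
  have "Re (laplacian g11 g12 g22 G q) = (1 / s q) * (Re (dx (LX g11 g12 g22 G) q) + Re (dy (LY g11 g12 g22 G) q))"
    unfolding lap_eq s_def D_def by simp
  also have "\<dots> = (1 / s q) * (s q * (A q * Re (dx (dx G) q) - B q * Re (dx (dy G) q))
      + s q * (B' q * Re (dy (dx G) q) + C q * Re (dy (dy G) q)))"
    unfolding dX dY using cx cy by simp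
  also have "\<dots> = A q * Re (dx (dx G) q) - B q * (Re (dy (dx G) q) + Re (dx (dy G) q)) + C q * Re (dy (dy G) q)"
    using sq metric_facts(4)[OF S rm q] by (simp add: field_simps B'_def B_def D_def)
  finally show ?thesis unfolding A_def B_def C_def D_def .
qed



lemma quad_form:
  fixes a b c P m R :: real
  assumes a: "a > 0" and det: "a * c - b^2 > 0"
    and Q: "\<And>\<alpha> \<beta>. \<alpha>^2 * P + \<alpha> * \<beta> * m + \<beta>^2 * R \<le> 0"
  shows "a * P - b * m + c * R \<le> 0"
proof -
  have 1: "1^2 * P + 1 * (- b / a) * m + (- b / a)^2 * R \<le> 0" by (rule Q)
  have 2: "0^2 * P + 0 * 1 * m + 1^2 * R \<le> 0" by (rule Q)
  then have R: "R \<le> 0" by simp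
  from 1 have "a * (P - (b / a) * m + (b^2 / a^2) * R) \<le> 0"
    using a by (simp add: mult_nonpos_nonneg power_divide mult_le_0_iff)
  then have 3: "a * P - b * m + (b^2 / a) * R \<le> 0"
    using a by (simp add: algebra_simps power2_eq_square)
  have "c - b^2 / a \<ge> 0" using a det by (simp add: field_simps)
  then have "(c - b^2 / a) * R \<le> 0" using R by (simp add: mult_nonneg_nonpos)
  with 3 show ?thesis by (simp add: algebra_simps)
qed

lemma dnorm_bound:
  assumes a: "g11 z > 0" and D: "gdet g11 g12 g22 z > 0"
    and dn: "dnorm g11 g12 g22 u z \<le> M"
  shows "(cmod (dx u z))^2 + (cmod (dy u z))^2 \<le> (g11 z + g22 z) * M^2"
proof -
  define a where "a = g11 z"
  define b where "b = g12 z"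
  define c where "c = g22 z"
  define X where "X = dx u z"
  define Y where "Y = dy u z"
  define d where "d = a * c - b^2"
  have d: "d > 0" using D unfolding d_def a_def b_def c_def gdet_def by simp
  have cpos: "c > 0"
  proof -
    have "a * c > 0" using d unfolding d_def by (smt (verit) zero_le_power2)
    then show ?thesis using a unfolding a_def by (simp add: zero_less_mult_iff)
  qed
  define Qn where "Qn = c * (cmod X)^2 - 2 * b * (X \<bullet> Y) + a * (cmod Y)^2"
  have key: "(a + c) * Qn = d * ((cmod X)^2 + (cmod Y)^2) +
     ((c * Re X - b * Re Y)^2 + (b * Re X - a * Re Y)^2 + (c * Im X - b * Im Y)^2 + (b * Im X - a * Im Y)^2)"
    unfolding Qn_def d_def cmod_power2 inner_complex_def by (simp add: power2_eq_square algebra_simps)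
  have ge: "(a + c) * Qn \<ge> d * ((cmod X)^2 + (cmod Y)^2)" unfolding key by simp
  have q: "Qn / d = (c / d) * (cmod X)^2 - 2 * (b / d) * (X \<bullet> Y) + (a / d) * (cmod Y)^2"
    unfolding Qn_def using d by (simp add: field_simps)
  have "dnorm g11 g12 g22 u z = sqrt ((c / d) * (cmod X)^2 - 2 * (b / d) * (X \<bullet> Y) + (a / d) * (cmod Y)^2)"
    unfolding dnorm_def Let_def a_def b_def c_def X_def Y_def d_def gdet_def by (rule refl)
  then have dn': "sqrt (Qn / d) \<le> M" using dn unfolding q by simp
  have Qn0: "Qn \<ge> 0"
  proof -
    have "d * ((cmod X)^2 + (cmod Y)^2) \<ge> 0" using d by simp
    then have "(a + c) * Qn \<ge> 0" using ge by linarith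
    then show ?thesis using a cpos unfolding a_def by (simp add: zero_le_mult_iff)
  qed
  have "Qn / d \<le> M^2"
  proof -
    have qd: "0 \<le> Qn / d" by (rule divide_nonneg_pos[OF Qn0 d])
    then have "sqrt (Qn / d) ^ 2 = Qn / d" by simp
    moreover have "0 \<le> sqrt (Qn / d)" using qd by simp
    ultimately show ?thesis using dn' by (metis power_mono)
  qed
  then have "Qn \<le> d * M^2" using d by (simp add: field_simps)
  then have "(a + c) * Qn \<le> (a + c) * (d * M^2)" using a cpos unfolding a_def by (intro mult_left_mono) auto
  with ge have "d * ((cmod X)^2 + (cmod Y)^2) \<le> d * ((a + c) * M^2)" by (simp add: algebra_simps)
  then have "(cmod X)^2 + (cmod Y)^2 \<le> (a + c) * M^2" using d by simp
  then show ?thesis unfolding X_def Y_def a_def c_def .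
qed

lemma hvd_Im:
  "(f has_vector_derivative d) F \<Longrightarrow> ((\<lambda>t. Im (f t)) has_real_derivative Im d) F"
  using bounded_linear.has_vector_derivative[OF bounded_linear_Im, of f d F]
  by (simp add: has_real_derivative_iff_has_vector_derivative)

lemma line_bound_x:
  fixes h :: "complex \<Rightarrow> complex"
  assumes C: "C1 S h" and W: "\<And>s. \<bar>s\<bar> \<le> \<bar>T\<bar> \<Longrightarrow> p + of_real s \<in> S \<and> cmod (dx h (p + of_real s)) \<le> Bd"
  shows "cmod (h (p + of_real T) - h p) \<le> 2 * Bd * \<bar>T\<bar>"
proof -
  have A: "\<bar>Re (h (p + of_real T)) - Re (h (p + of_real 0)) - T * 0\<bar> \<le> Bd * \<bar>T\<bar>"
  proof (rule mvt_bound[where \<phi>'="\<lambda>s. Re (dx h (p + of_real s))"])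
    fix s :: real assume s: "\<bar>s\<bar> \<le> \<bar>T\<bar>"
    have "((\<lambda>t. Re (h ((p + of_real s) + of_real t))) has_real_derivative Re (dx h (p + of_real s))) (at 0)"
      using C1_Re_x[OF C] W[OF s] by blast
    then show "((\<lambda>s. Re (h (p + of_real s))) has_real_derivative Re (dx h (p + of_real s))) (at s)"
      using DERIV_shift[of "\<lambda>s. Re (h (p + of_real s))" _ 0 s] by (simp add: algebra_simps)
    show "\<bar>Re (dx h (p + of_real s)) - 0\<bar> \<le> Bd" using W[OF s] abs_Re_le_cmod[of "dx h (p + of_real s)"] by simp
  qed
  have B: "\<bar>Im (h (p + of_real T)) - Im (h (p + of_real 0)) - T * 0\<bar> \<le> Bd * \<bar>T\<bar>"
  proof (rule mvt_bound[where \<phi>'="\<lambda>s. Im (dx h (p + of_real s))"])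
    fix s :: real assume s: "\<bar>s\<bar> \<le> \<bar>T\<bar>"
    have "((\<lambda>t. Im (h ((p + of_real s) + of_real t))) has_real_derivative Im (dx h (p + of_real s))) (at 0)"
      using hvd_Im[OF C1D(2)[OF C]] W[OF s] by blast
    then show "((\<lambda>s. Im (h (p + of_real s))) has_real_derivative Im (dx h (p + of_real s))) (at s)"
      using DERIV_shift[of "\<lambda>s. Im (h (p + of_real s))" _ 0 s] by (simp add: algebra_simps)
    show "\<bar>Im (dx h (p + of_real s)) - 0\<bar> \<le> Bd" using W[OF s] abs_Im_le_cmod[of "dx h (p + of_real s)"] by simp
  qed
  have "cmod (h (p + of_real T) - h p) \<le> \<bar>Re (h (p + of_real T) - h p)\<bar> + \<bar>Im (h (p + of_real T) - h p)\<bar>"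
    by (rule cmod_le)
  also have "\<dots> \<le> Bd * \<bar>T\<bar> + Bd * \<bar>T\<bar>" using A B by simp
  finally show ?thesis by simp
qed

lemma line_bound_y:
  fixes h :: "complex \<Rightarrow> complex"
  assumes C: "C1 S h" and W: "\<And>s. \<bar>s\<bar> \<le> \<bar>T\<bar> \<Longrightarrow> p + \<i> * of_real s \<in> S \<and> cmod (dy h (p + \<i> * of_real s)) \<le> Bd"
  shows "cmod (h (p + \<i> * of_real T) - h p) \<le> 2 * Bd * \<bar>T\<bar>"
proof -
  have A: "\<bar>Re (h (p + \<i> * of_real T)) - Re (h (p + \<i> * of_real 0)) - T * 0\<bar> \<le> Bd * \<bar>T\<bar>"
  proof (rule mvt_bound[where \<phi>'="\<lambda>s. Re (dy h (p + \<i> * of_real s))"])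
    fix s :: real assume s: "\<bar>s\<bar> \<le> \<bar>T\<bar>"
    have "((\<lambda>t. Re (h ((p + \<i> * of_real s) + \<i> * of_real t))) has_real_derivative Re (dy h (p + \<i> * of_real s))) (at 0)"
      using C1_Re_y[OF C] W[OF s] by blast
    then show "((\<lambda>s. Re (h (p + \<i> * of_real s))) has_real_derivative Re (dy h (p + \<i> * of_real s))) (at s)"
      using DERIV_shift[of "\<lambda>s. Re (h (p + \<i> * of_real s))" _ 0 s] by (simp add: algebra_simps)
    show "\<bar>Re (dy h (p + \<i> * of_real s)) - 0\<bar> \<le> Bd" using W[OF s] abs_Re_le_cmod[of "dy h (p + \<i> * of_real s)"] by simp
  qed
  have B: "\<bar>Im (h (p + \<i> * of_real T)) - Im (h (p + \<i> * of_real 0)) - T * 0\<bar> \<le> Bd * \<bar>T\<bar>"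
  proof (rule mvt_bound[where \<phi>'="\<lambda>s. Im (dy h (p + \<i> * of_real s))"])
    fix s :: real assume s: "\<bar>s\<bar> \<le> \<bar>T\<bar>"
    have "((\<lambda>t. Im (h ((p + \<i> * of_real s) + \<i> * of_real t))) has_real_derivative Im (dy h (p + \<i> * of_real s))) (at 0)"
      using hvd_Im[OF C1D(3)[OF C]] W[OF s] by blast
    then show "((\<lambda>s. Im (h (p + \<i> * of_real s))) has_real_derivative Im (dy h (p + \<i> * of_real s))) (at s)"
      using DERIV_shift[of "\<lambda>s. Im (h (p + \<i> * of_real s))" _ 0 s] by (simp add: algebra_simps)
    show "\<bar>Im (dy h (p + \<i> * of_real s)) - 0\<bar> \<le> Bd" using W[OF s] abs_Im_le_cmod[of "dy h (p + \<i> * of_real s)"] by simp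
  qed
  have "cmod (h (p + \<i> * of_real T) - h p) \<le> \<bar>Re (h (p + \<i> * of_real T) - h p)\<bar> + \<bar>Im (h (p + \<i> * of_real T) - h p)\<bar>"
    by (rule cmod_le)
  also have "\<dots> \<le> Bd * \<bar>T\<bar> + Bd * \<bar>T\<bar>" using A B by simp
  finally show ?thesis by simp
qed



lemma sm_Re:
  assumes S: "open S"
  shows "sm n S (\<lambda>z. complex_of_real (Re z))"
proof -
  have x: "((\<lambda>t::real. complex_of_real (Re (z + complex_of_real t))) has_vector_derivative 1) (at 0)" for z
  proof -
    have "((\<lambda>t::real. complex_of_real (Re z + t)) has_vector_derivative of_real 1) (at 0)"
      by (intro has_vector_derivative_of_real) (auto intro!: derivative_eq_intros)
    then show ?thesis by simp
  qed
  have y: "((\<lambda>t::real. complex_of_real (Re (z + \<i> * complex_of_real t))) has_vector_derivative 0) (at 0)" for z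
    by simp
  have c: "continuous_on S (\<lambda>z. complex_of_real (Re z))" by (intro continuous_intros)
  note r = C1_intro[OF c, of "\<lambda>z. 1" "\<lambda>z. 0", OF x y]
  show ?thesis
  proof (cases n)
    case 0 then show ?thesis using r by (simp add: sm0)
  next
    case (Suc m)
    have "sm m S (dx (\<lambda>z. complex_of_real (Re z)))"
      by (rule sm_cong[OF S _ sm_const[OF S, of m "1::complex"]]) (use r in auto)
    moreover have "sm m S (dy (\<lambda>z. complex_of_real (Re z)))"
      by (rule sm_cong[OF S _ sm_const[OF S, of m "0::complex"]]) (use r in auto)
    ultimately show ?thesis using r Suc by (simp add: sm_Suc)
  qed
qed

lemma sm_Im:
  assumes S: "open S"
  shows "sm n S (\<lambda>z. complex_of_real (Im z))"
proof -
  have y: "((\<lambda>t::real. complex_of_real (Im (z + \<i> * complex_of_real t))) has_vector_derivative 1) (at 0)" for z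
  proof -
    have "((\<lambda>t::real. complex_of_real (Im z + t)) has_vector_derivative of_real 1) (at 0)"
      by (intro has_vector_derivative_of_real) (auto intro!: derivative_eq_intros)
    then show ?thesis by simp
  qed
  have x: "((\<lambda>t::real. complex_of_real (Im (z + complex_of_real t))) has_vector_derivative 0) (at 0)" for z
    by simp
  have c: "continuous_on S (\<lambda>z. complex_of_real (Im z))" by (intro continuous_intros)
  note r = C1_intro[OF c, of "\<lambda>z. 0" "\<lambda>z. 1", OF x y]
  show ?thesis
  proof (cases n)
    case 0 then show ?thesis using r by (simp add: sm0)
  next
    case (Suc m)
    have "sm m S (dx (\<lambda>z. complex_of_real (Im z)))"
      by (rule sm_cong[OF S _ sm_const[OF S, of m "0::complex"]]) (use r in auto)
    moreover have "sm m S (dy (\<lambda>z. complex_of_real (Im z)))"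
      by (rule sm_cong[OF S _ sm_const[OF S, of m "1::complex"]]) (use r in auto)
    ultimately show ?thesis using r Suc by (simp add: sm_Suc)
  qed
qed

lemma lap_lin3:
  fixes u v x :: "complex \<Rightarrow> complex"
  assumes S: "open S" and rm: "riem_metric_on S g11 g12 g22"
    and u: "sm 2 S u" and v: "sm 2 S v" and x: "sm 2 S x" and z: "z \<in> S"
  shows "laplacian g11 g12 g22 (\<lambda>w. u w + a * v w + b * x w + d) z =
     laplacian g11 g12 g22 u z + a * laplacian g11 g12 g22 v z + b * laplacian g11 g12 g22 x z"
proof -
  define F1 where "F1 = (\<lambda>w. 1 * u w + a * v w)"
  define F2 where "F2 = (\<lambda>w. b * x w + d * (\<lambda>w. 1) w)"
  have s1: "sm 2 S F1" unfolding F1_def by (intro sm_add sm_mult sm_const S u v)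
  have s2: "sm 2 S F2" unfolding F2_def by (intro sm_add sm_mult sm_const S x)
  have e: "(\<lambda>w. u w + a * v w + b * x w + d) = (\<lambda>w. 1 * F1 w + 1 * F2 w)"
    by (simp add: F1_def F2_def fun_eq_iff algebra_simps)
  have l1: "laplacian g11 g12 g22 F1 z = 1 * laplacian g11 g12 g22 u z + a * laplacian g11 g12 g22 v z"
    unfolding F1_def by (rule lap_lin[OF S rm u v z])
  have l2: "laplacian g11 g12 g22 F2 z = b * laplacian g11 g12 g22 x z + d * laplacian g11 g12 g22 (\<lambda>w. 1) z"
    unfolding F2_def by (rule lap_lin[OF S rm x sm_const[OF S] z])
  show ?thesis unfolding e lap_lin[OF S rm s1 s2 z] l1 l2 lap_const by simp
qed

lemma cont_bound:
  fixes f :: "complex \<Rightarrow> 'a::real_normed_vector"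
  assumes "compact K" "continuous_on K f"
  shows "\<exists>B. \<forall>x\<in>K. norm (f x) \<le> B"
  using compact_continuous_image[OF assms(2,1)] compact_imp_bounded bounded_iff by (metis imageI)



lemma tri3: "cmod (x1 + complex_of_real a * x2 + complex_of_real b * x3) \<le> cmod x1 + \<bar>a\<bar> * cmod x2 + \<bar>b\<bar> * cmod x3"
proof -
  have "cmod (x1 + complex_of_real a * x2 + complex_of_real b * x3) \<le> cmod (x1 + complex_of_real a * x2) + cmod (complex_of_real b * x3)"
    by (rule norm_triangle_ineq)
  moreover have "cmod (x1 + complex_of_real a * x2) \<le> cmod x1 + cmod (complex_of_real a * x2)"
    by (rule norm_triangle_ineq)
  ultimately show ?thesis by (simp add: norm_mult)
qed

theorem lemma4:
  fixes c \<delta> M :: real and g11 g12 g22 :: "complex \<Rightarrow> real"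
  assumes "c > 0" and "\<delta> > 0" and "M > 0"
    and "riem_metric_on (ball 0 c) g11 g12 g22"
  shows "\<exists>lam::real. \<forall>f :: complex \<Rightarrow> complex.
           smooth_on (ball 0 c) f \<and>
           (\<forall>z\<in>ball 0 c. cmod (f z) \<le> \<delta>) \<and>
           (\<forall>z\<in>ball 0 c. dnorm g11 g12 g22 (laplacian g11 g12 g22 f) z \<le> M)
           \<longrightarrow> (\<forall>z\<in>ball 0 (c / 4). cmod (laplacian g11 g12 g22 f z) \<le> lam)"
proof -
  note cpos = assms(1) and dpos = assms(2) and Mpos = assms(3)
  define S where "S = ball (0::complex) c"
  have S: "open S" unfolding S_def by simp
  have rm: "riem_metric_on S g11 g12 g22" using assms(4) unfolding S_def .
  define W where "W = cball (0::complex) (3 * c / 4)"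
  have WS: "W \<subseteq> S" unfolding W_def S_def using cpos by (intro cball_subset_ball_iff[THEN iffD2]) auto
  have cW: "compact W" unfolding W_def by simp
  have OW: "0 \<in> W" unfolding W_def using cpos by simp
  let ?L = "laplacian g11 g12 g22"
  have cg: "continuous_on W (\<lambda>w. g11 w + g22 w)"
  proof -
    have "continuous_on S g11" "continuous_on S g22"
      using metric_facts(1,3)[OF S rm, of 0] by (simp_all add: sm0 C1_def)
    then show ?thesis using WS by (intro continuous_intros) (auto intro: continuous_on_subset)
  qed
  obtain T0 where T0: "\<forall>w\<in>W. norm (g11 w + g22 w) \<le> T0" using cont_bound[OF cW cg] by blast
  define Tm where "Tm = max T0 0"
  have Tm: "\<And>w. w \<in> W \<Longrightarrow> g11 w + g22 w \<le> Tm" "Tm \<ge> 0" using T0 unfolding Tm_def by force+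
  define Bd where "Bd = sqrt Tm * M"
  have Bd0: "Bd \<ge> 0" using Tm Mpos unfolding Bd_def by simp
  define Rf where "Rf = (\<lambda>z::complex. complex_of_real (Re z))"
  define If where "If = (\<lambda>z::complex. complex_of_real (Im z))"
  define Qf where "Qf = (\<lambda>z. Rf z * Rf z + If z * If z)"
  have sR: "sm n S Rf" for n unfolding Rf_def by (rule sm_Re[OF S])
  have sI: "sm n S If" for n unfolding If_def by (rule sm_Im[OF S])
  have sQ: "sm n S Qf" for n unfolding Qf_def by (intro sm_add sm_mult S sR sI)
  have clap: "continuous_on W (?L u)" if "\<And>n. sm n S u" for u
  proof -
    have "sm 0 S (?L u)" by (rule sm_lap[OF S rm that])
    then have "continuous_on S (?L u)" by (simp add: sm0 C1_def)
    then show ?thesis using WS continuous_on_subset by blast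
  qed
  obtain PQ where PQ: "\<forall>w\<in>W. norm (?L Qf w) \<le> PQ" using cont_bound[OF cW clap[OF sQ]] by blast
  obtain PR where PR: "\<forall>w\<in>W. norm (?L Rf w) \<le> PR" using cont_bound[OF cW clap[OF sR]] by blast
  obtain PI where PI: "\<forall>w\<in>W. norm (?L If w) \<le> PI" using cont_bound[OF cW clap[OF sI]] by blast
  have P0: "PQ \<ge> 0" "PR \<ge> 0" "PI \<ge> 0" using PQ PR PI OW by (meson norm_ge_zero order_trans)+
  define P where "P = PQ + 2 * c * PR + 2 * c * PI"
  define r where "r = c / 4"
  have r: "r > 0" using cpos by (simp add: r_def)
  define k where "k = 2 * \<delta> / r^2 + 1"
  have k: "k > 0" "k * r^2 > 2 * \<delta>" using dpos r by (simp_all add: k_def add_pos_pos field_simps)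
  define lam where "lam = 4 * Bd * r + k * P + 1"
  show ?thesis
  proof (rule exI[of _ lam], intro allI impI ballI)
    fix f :: "complex \<Rightarrow> complex" and p :: complex
    assume hyp: "smooth_on (ball 0 c) f \<and> (\<forall>z\<in>ball 0 c. cmod (f z) \<le> \<delta>) \<and>
           (\<forall>z\<in>ball 0 c. dnorm g11 g12 g22 (?L f) z \<le> M)"
    assume p: "p \<in> ball 0 (c / 4)"
    have sf: "sm n S f" for n using hyp unfolding S_def smooth_on_sm by blast
    have fb: "\<And>z. z \<in> S \<Longrightarrow> cmod (f z) \<le> \<delta>" using hyp unfolding S_def by blast
    have dnb: "\<And>z. z \<in> S \<Longrightarrow> dnorm g11 g12 g22 (?L f) z \<le> M" using hyp unfolding S_def by blast
    define h where "h = ?L f"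
    have sh: "sm n S h" for n unfolding h_def by (rule sm_lap[OF S rm sf])
    have ch: "C1 S h" using sh sm_C1 by blast
    have pn: "cmod p < c / 4" using p by simp
    have dhb: "cmod (dx h w) \<le> Bd \<and> cmod (dy h w) \<le> Bd" if w: "w \<in> W" for w
    proof -
      have wS: "w \<in> S" using w WS by blast
      have "(cmod (dx h w))^2 + (cmod (dy h w))^2 \<le> (g11 w + g22 w) * M^2"
        unfolding h_def by (rule dnorm_bound[OF metric_facts(5)[OF S rm wS] metric_facts(4)[OF S rm wS] dnb[OF wS]])
      also have "\<dots> \<le> Tm * M^2" using Tm(1)[OF w] by (intro mult_right_mono) auto
      finally have ss: "(cmod (dx h w))^2 + (cmod (dy h w))^2 \<le> Tm * M^2" .
      have e: "sqrt (Tm * M^2) = Bd" unfolding Bd_def using Mpos by (simp add: real_sqrt_mult)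
      have "(cmod (dx h w))^2 \<le> Tm * M^2" "(cmod (dy h w))^2 \<le> Tm * M^2" using ss zero_le_power2[of "cmod (dx h w)"] zero_le_power2[of "cmod (dy h w)"] by linarith+
      then show ?thesis using real_le_rsqrt e by metis
    qed
    have lip: "cmod (h z - h p) \<le> 4 * Bd * r" if z: "z \<in> cball p r" for z
    proof -
      define a where "a = Re (z - p)"
      define b where "b = Im (z - p)"
      have zp: "cmod (z - p) \<le> r" using z by (simp add: dist_norm norm_minus_commute)
      have ab: "\<bar>a\<bar> \<le> r" "\<bar>b\<bar> \<le> r" unfolding a_def b_def using zp abs_Re_le_cmod abs_Im_le_cmod order_trans by blast+
      define m where "m = p + of_real a"
      have 1: "cmod (h m - h p) \<le> 2 * Bd * \<bar>a\<bar>"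
        unfolding m_def
      proof (rule line_bound_x[OF ch])
        fix s :: real assume s: "\<bar>s\<bar> \<le> \<bar>a\<bar>"
        have "cmod (p + of_real s) \<le> cmod p + \<bar>s\<bar>" using norm_triangle_ineq[of p "of_real s"] by simp
        also have "\<dots> \<le> 3 * c / 4" using pn s ab r unfolding r_def by linarith
        finally have "p + of_real s \<in> W" unfolding W_def by simp
        then show "p + of_real s \<in> S \<and> cmod (dx h (p + of_real s)) \<le> Bd" using WS dhb by blast
      qed
      have 2: "cmod (h (m + \<i> * of_real b) - h m) \<le> 2 * Bd * \<bar>b\<bar>"
      proof (rule line_bound_y[OF ch])
        fix s :: real assume s: "\<bar>s\<bar> \<le> \<bar>b\<bar>"
        have "cmod (m + \<i> * of_real s) \<le> cmod p + \<bar>a\<bar> + \<bar>s\<bar>"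
          unfolding m_def using norm_triangle_ineq[of p "of_real a"] norm_triangle_ineq[of "p + of_real a" "\<i> * of_real s"]
          by (simp add: norm_mult)
        also have "\<dots> \<le> 3 * c / 4" using pn s ab r unfolding r_def by linarith
        finally have "m + \<i> * of_real s \<in> W" unfolding W_def by simp
        then show "m + \<i> * of_real s \<in> S \<and> cmod (dy h (m + \<i> * of_real s)) \<le> Bd" using WS dhb by blast
      qed
      have mz: "m + \<i> * of_real b = z" unfolding m_def a_def b_def by (simp add: complex_eq_iff)
      have "cmod (h z - h p) \<le> cmod (h z - h m) + cmod (h m - h p)"
        using norm_triangle_ineq[of "h z - h m" "h m - h p"] by simp
      also have "\<dots> \<le> 2 * Bd * \<bar>b\<bar> + 2 * Bd * \<bar>a\<bar>" using 1 2 mz by simp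
      also have "\<dots> \<le> 2 * Bd * r + 2 * Bd * r" using ab Bd0 by (intro add_mono mult_left_mono) auto
      finally show ?thesis by simp
    qed
    show "cmod (?L f p) \<le> lam"
    proof (rule ccontr)
      assume "\<not> cmod (?L f p) \<le> lam"
      then have Alam: "cmod (h p) > lam" unfolding h_def by simp
      define A where "A = cmod (h p)"
      have "4 * Bd * r \<ge> 0" using Bd0 r by simp
      moreover have "P \<ge> 0" using P0 cpos unfolding P_def by simp
      then have "k * P \<ge> 0" using k by simp
      ultimately have Apos: "A > 0" using Alam unfolding A_def lam_def by linarith
      define e where "e = cnj (h p) / complex_of_real A"
      have hh: "cnj (h p) * h p = complex_of_real A * complex_of_real A"
        unfolding A_def using complex_norm_square[of "h p"] by (simp add: power2_eq_square mult.commute)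
      have ehp: "e * h p = complex_of_real A"
        unfolding e_def using Apos by (simp add: hh)
      have ne: "cmod e = 1" unfolding e_def A_def using Apos[unfolded A_def] by (simp add: norm_divide)
      have Reh: "Re (e * h z) \<ge> A - 4 * Bd * r" if z: "z \<in> cball p r" for z
      proof -
        have "e * h z = complex_of_real A + e * (h z - h p)" using ehp by (simp add: algebra_simps)
        then have "Re (e * h z) = A + Re (e * (h z - h p))" by simp
        moreover have "Re (e * (h z - h p)) \<ge> - cmod (e * (h z - h p))" using abs_Re_le_cmod[of "e * (h z - h p)"] by linarith
        moreover have "cmod (e * (h z - h p)) = cmod (h z - h p)" using ne by (simp add: norm_mult)
        ultimately show ?thesis using lip[OF z] by linarith
      qed
      define \<psi> where "\<psi> = (\<lambda>w. Qf w + complex_of_real (-2 * Re p) * Rf w + complex_of_real (-2 * Im p) * If w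
                             + complex_of_real ((cmod p)^2))"
      have Re\<psi>: "Re (\<psi> w) = (cmod (w - p))^2" for w
        unfolding \<psi>_def Qf_def Rf_def If_def cmod_power2 by (simp add: power2_eq_square algebra_simps)
      have s\<psi>: "sm n S \<psi>" for n unfolding \<psi>_def by (intro sm_add sm_mult sm_const S sQ sR sI)
      have L\<psi>: "cmod (?L \<psi> w) \<le> P" if w: "w \<in> W" for w
      proof -
        have wS: "w \<in> S" using w WS by blast
        have eq: "?L \<psi> w = ?L Qf w + complex_of_real (-2 * Re p) * ?L Rf w + complex_of_real (-2 * Im p) * ?L If w"
          unfolding \<psi>_def by (rule lap_lin3[OF S rm sQ sR sI wS])
        have "cmod (?L \<psi> w) \<le> cmod (?L Qf w) + \<bar>-2 * Re p\<bar> * cmod (?L Rf w) + \<bar>-2 * Im p\<bar> * cmod (?L If w)"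
          unfolding eq by (rule tri3)
        also have "\<dots> = cmod (?L Qf w) + 2 * \<bar>Re p\<bar> * cmod (?L Rf w) + 2 * \<bar>Im p\<bar> * cmod (?L If w)"
          by (simp only: abs_minus_cancel abs_mult abs_numeral)
        also have "\<dots> \<le> PQ + 2 * c * PR + 2 * c * PI"
        proof -
          have rp: "\<bar>Re p\<bar> \<le> c" "\<bar>Im p\<bar> \<le> c" using pn abs_Re_le_cmod[of p] abs_Im_le_cmod[of p] cpos by linarith+
          have "2 * \<bar>Re p\<bar> * cmod (?L Rf w) \<le> 2 * c * PR"
            using rp PR w by (intro mult_mono) auto
          moreover have "2 * \<bar>Im p\<bar> * cmod (?L If w) \<le> 2 * c * PI"
            using rp PI w by (intro mult_mono) auto
          moreover have "cmod (?L Qf w) \<le> PQ" using PQ w by blast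
          ultimately show ?thesis by linarith
        qed
        finally show ?thesis unfolding P_def .
      qed
      define F where "F = (\<lambda>w. e * f w + complex_of_real (- k) * \<psi> w)"
      have sF: "sm n S F" for n unfolding F_def by (intro sm_add sm_mult sm_const S sf s\<psi>)
      have LF: "?L F w = e * h w + complex_of_real (- k) * ?L \<psi> w" if "w \<in> S" for w
        unfolding F_def h_def by (rule lap_lin[OF S rm sf s\<psi> that])
      have cpr: "cball p r \<subseteq> W"
      proof
        fix w assume "w \<in> cball p r"
        then have "cmod w \<le> cmod p + r" using norm_triangle_ineq[of p "w - p"] by (simp add: dist_norm norm_minus_commute)
        then have "cmod w \<le> 3 * c / 4" using pn cpos unfolding r_def by linarith
        then show "w \<in> W" unfolding W_def by simp
      qed
      have pos: "Re (?L F w) > 0" if w: "w \<in> cball p r" for w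
      proof -
        have wW: "w \<in> W" using w cpr by blast
        have wS: "w \<in> S" using wW WS by blast
        have "Re (?L F w) = Re (e * h w) - k * Re (?L \<psi> w)" using LF[OF wS] by simp
        moreover have "Re (?L \<psi> w) \<le> P" using L\<psi>[OF wW] abs_Re_le_cmod[of "?L \<psi> w"] by linarith
        moreover have "k * Re (?L \<psi> w) \<le> k * P" using calculation(2) k by (simp add: mult_left_mono)
        ultimately show ?thesis using Reh[OF w] Alam unfolding A_def lam_def by linarith
      qed
      have cF: "continuous_on (cball p r) (\<lambda>w. Re (F w))"
      proof -
        have "continuous_on S F" using sF[of 0] by (simp add: sm0 C1_def)
        then have "continuous_on (cball p r) F" using cpr WS continuous_on_subset by blast
        then show ?thesis by (intro continuous_intros)
      qed
      obtain q where q: "q \<in> cball p r" "\<And>y. y \<in> cball p r \<Longrightarrow> Re (F y) \<le> Re (F q)"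
      proof -
        have "cball p r \<noteq> {}" using r by simp
        from continuous_attains_sup[OF compact_cball this cF] show ?thesis using that by blast
      qed
      have "p \<in> cball p r" using r by simp
      then have pS: "p \<in> S" using cpr WS by blast
      have Fp: "Re (F p) \<ge> - \<delta>"
      proof -
        have "Re (F p) = Re (e * f p)" unfolding F_def using Re\<psi>[of p] by simp
        moreover have "\<bar>Re (e * f p)\<bar> \<le> cmod (e * f p)" by (rule abs_Re_le_cmod)
        moreover have "cmod (e * f p) \<le> \<delta>" using fb[OF pS] ne by (simp add: norm_mult)
        ultimately show ?thesis by linarith
      qed
      have qin: "dist p q < r"
      proof (rule ccontr)
        assume "\<not> dist p q < r"
        then have dq: "dist p q = r" using q(1) by simp
        have qS: "q \<in> S" using q(1) cpr WS by blast
        have "Re (F q) = Re (e * f q) - k * (cmod (q - p))^2" unfolding F_def using Re\<psi>[of q] by simp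
        also have "cmod (q - p) = r" using dq by (simp add: dist_norm norm_minus_commute)
        finally have "Re (F q) = Re (e * f q) - k * r^2" .
        moreover have "\<bar>Re (e * f q)\<bar> \<le> cmod (e * f q)" by (rule abs_Re_le_cmod)
        moreover have "cmod (e * f q) \<le> \<delta>" using fb[OF qS] ne by (simp add: norm_mult)
        moreover have "Re (F p) \<le> Re (F q)" using q(2) r by simp
        ultimately show False using Fp k by linarith
      qed
      define r0 where "r0 = r - dist p q"
      have r0: "r0 > 0" using qin by (simp add: r0_def)
      have bq: "ball q r0 \<subseteq> cball p r"
      proof
        fix y assume "y \<in> ball q r0"
        then have "dist q y < r0" by simp
        then show "y \<in> cball p r" using dist_triangle[of p y q] unfolding r0_def by simp
      qed
      have qS: "q \<in> S" using q(1) cpr WS by blast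
      have bqS: "ball q r0 \<subseteq> S" using bq cpr WS by blast
      have sF2: "sm 2 S F" by (rule sF)
      note MS = max_second_order[OF S sF2 qS r0 bqS q(2)[OF subsetD[OF bq]]]
      have crit: "Re (?L F q) =
         (g22 q / gdet g11 g12 g22 q) * Re (dx (dx F) q)
         - (g12 q / gdet g11 g12 g22 q) * (Re (dy (dx F) q) + Re (dx (dy F) q))
         + (g11 q / gdet g11 g12 g22 q) * Re (dy (dy F) q)"
        by (rule lap_crit[OF S rm sF2 qS MS(1) MS(2)])
      have Dq: "gdet g11 g12 g22 q > 0" by (rule metric_facts(4)[OF S rm qS])
      have g22q: "g22 q > 0" by (rule metric_facts(6)[OF S rm qS])
      have "(g22 q / gdet g11 g12 g22 q) * Re (dx (dx F) q)
         - (g12 q / gdet g11 g12 g22 q) * (Re (dy (dx F) q) + Re (dx (dy F) q))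
         + (g11 q / gdet g11 g12 g22 q) * Re (dy (dy F) q) \<le> 0"
      proof (rule quad_form)
        show "g22 q / gdet g11 g12 g22 q > 0" using Dq g22q by simp
        have "(g22 q / gdet g11 g12 g22 q) * (g11 q / gdet g11 g12 g22 q) - (g12 q / gdet g11 g12 g22 q)^2
            = 1 / gdet g11 g12 g22 q"
        proof -
          have Dd: "g11 q * g22 q - (g12 q)^2 = gdet g11 g12 g22 q" unfolding gdet_def by simp
          have "(g22 q / gdet g11 g12 g22 q) * (g11 q / gdet g11 g12 g22 q) - (g12 q / gdet g11 g12 g22 q)^2
              = (g11 q * g22 q - (g12 q)^2) / (gdet g11 g12 g22 q)^2"
            using Dq by (simp add: field_simps power2_eq_square)
          also have "\<dots> = 1 / gdet g11 g12 g22 q" using Dq unfolding Dd by (simp add: power2_eq_square)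
          finally show ?thesis .
        qed
        then show "(g22 q / gdet g11 g12 g22 q) * (g11 q / gdet g11 g12 g22 q) - (g12 q / gdet g11 g12 g22 q)^2 > 0"
          using Dq by simp
        show "\<And>\<alpha> \<beta>. \<alpha>^2 * Re (dx (dx F) q) + \<alpha> * \<beta> * (Re (dy (dx F) q) + Re (dx (dy F) q)) + \<beta>^2 * Re (dy (dy F) q) \<le> 0"
          by (rule MS(3))
      qed
      with crit pos[OF q(1)] show False by linarith
    qed
  qed
qed

end
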